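(* Let $d\ge 1$, let $T>0$ be a finite random variable with $D\in\{1,\dots,d\}$, and let $\tilde T$ be a finite random variable with $0<\tilde T\le T$ and $\tilde D=D\,\mathbf 1\{\tilde T=T\}\in\{0,\dots,d\}$. Let $(\tilde T_1,\tilde D_1),\dots,(\tilde T_n,\tilde D_n)$ be independent copies of $(\tilde T,\tilde D)$, and let $\hat{\mathbf P}_n(t)$ be the Aalen--Johansen estimator defined below. Then $\hat{\mathbf P}_n(t)$ is a consistent estimator of $\mathbf P(t)$ as $n\to\infty$ for every $t\in\mathcal J$ if and only if $\tilde{\mathbf H}(t)=\mathbf H(t)$ for all $t\in\mathcal J$. Equivalently, the Aalen--Johansen estimators of $F_j(t)$, namely the entries $(1,j+1)$ of $\hat{\mathbf P}_n(t)$, are consistent for all $t\in\mathcal J$ and all $j=1,\dots,d$ if and only if $\tilde H_j(t)=H_j(t)$ for all $t\in\mathcal J$ and all $j=1,\dots,d$.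
   Context: Quantities of interest: - $S(t)=P(T>t)$. - $F_j(t)=P(T\le t,D=j)$. - $H_j(t)=\int_{(0,t]}S(s-)^{-1}F_j(ds)$ for $j=1,\dots,d$, and $H=\sum_{j=1}^d H_j$. Observed quantities: - $\tilde S(t)=P(\tilde T>t)$. - $\tilde F_j(t)=P(\tilde T\le t,\tilde D=j)$ for $j=0,\dots,d$. - $\tilde H_j(t)=\int_{(0,t]}\tilde S(s-)^{-1}\tilde F_j(ds)$, and $\tilde H=\sum_{j=1}^d\tilde H_j$. - Division by $0$ occurs only on null sets of the integrator and may be interpreted arbitrarily. - $\mathcal J=\{t\ge0:\tilde S(t)>0\}$. Matrices. $\mathbf P(t)$ is the $(d+1)\times(d+1)$ matrix with - first row $(S(t),F_1(t),\dots,F_d(t))$; - rows $2,\dots,d+1$ equal to the corresponding rows of the identity matrix. $\mathbf H(t)$ is the $(d+1)\times(d+1)$ matrix with first row $(-H(t),H_1(t),\dots,H_d(t))$ and all other rows zero. $\tilde{\mathbf H}(t)$ is defined in the same way with $\tilde H,\tilde H_j$ in place of $H,H_j$. Estimators. The Nelson--Aalen estimator is $$\hat H_{j,n}(t)=\sum_{i:\tilde T_i\le t,\tilde D_i=j}\frac{1}{\#\{k:\tilde T_k\ge \tilde T_i\}}.$$ Let $\hat H_n=\sum_{j=1}^d\hat H_{j,n}$, and let $\hat{\mathbf H}_n(t)$ be the matrix with first row $(-\hat H_n(t),\hat H_{1,n}(t),\dots,\hat H_{d,n}(t))$ and other rows zero. The Aalen--Johansen estimator is the product integral $\hat{\mathbf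 P}_n(t)=\prod_{(0,t]}(\mathbf I+\hat{\mathbf H}_n(ds))$, that is, the ordered finite product over jump times $s\le t$ of $\mathbf I+\Delta\hat{\mathbf H}_n(s)$. *)

theory Defs
  imports "HOL-Probability.Probability" "Jordan_Normal_Form.Matrix"
begin

definition surv :: "'a measure \<Rightarrow> ('a \<Rightarrow> real) \<Rightarrow> real \<Rightarrow> real" where
  "surv M X t = measure M {\<omega> \<in> space M. X \<omega> > t}"

definition subdist :: "'a measure \<Rightarrow> ('a \<Rightarrow> real) \<Rightarrow> ('a \<Rightarrow> nat) \<Rightarrow> nat \<Rightarrow> real \<Rightarrow> real" where
  "subdist M X Y j t = measure M {\<omega> \<in> space M. X \<omega> \<le> t \<and> Y \<omega> = j}"

definition left_lim :: "(real \<Rightarrow> real) \<Rightarrow> real \<Rightarrow> real" where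
  "left_lim f s = Lim (at_left s) f"

text \<open>Cause-specific cumulative hazard
  H_j(t) = integral over (0,t] of S(s-)^{-1} F_j(ds), with F_j(ds) the
  Lebesgue--Stieltjes measure of F_j (division by 0 yields 0).\<close>
definition cumhaz :: "'a measure \<Rightarrow> ('a \<Rightarrow> real) \<Rightarrow> ('a \<Rightarrow> nat) \<Rightarrow> nat \<Rightarrow> real \<Rightarrow> real" where
  "cumhaz M X Y j t =
     (LINT s:{0<..t}|interval_measure (subdist M X Y j). 1 / left_lim (surv M X) s)"

definition cumhaz_tot :: "'a measure \<Rightarrow> ('a \<Rightarrow> real) \<Rightarrow> ('a \<Rightarrow> nat) \<Rightarrow> nat \<Rightarrow> real \<Rightarrow> real" where
  "cumhaz_tot M X Y d t = (\<Sum>j\<in>{1..d}. cumhaz M X Y j t)"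

text \<open>The matrix P(t) (indices are 0-based: paper row 1 = row 0, column j+1 = column j).\<close>
definition Pmat :: "'a measure \<Rightarrow> ('a \<Rightarrow> real) \<Rightarrow> ('a \<Rightarrow> nat) \<Rightarrow> nat \<Rightarrow> real \<Rightarrow> real mat" where
  "Pmat M X Y d t = mat (d+1) (d+1) (\<lambda>(i,k).
      if i = 0 then (if k = 0 then surv M X t else subdist M X Y k t)
      else (if i = k then 1 else 0))"

text \<open>The matrix H(t) (resp. tilde H(t) when applied to the observed variables).\<close>
definition Hmat :: "'a measure \<Rightarrow> ('a \<Rightarrow> real) \<Rightarrow> ('a \<Rightarrow> nat) \<Rightarrow> nat \<Rightarrow> real \<Rightarrow> real mat" where
  "Hmat M X Y d t = mat (d+1) (d+1) (\<lambda>(i,k).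
      if i = 0 then (if k = 0 then - cumhaz_tot M X Y d t else cumhaz M X Y k t)
      else 0)"

definition NA :: "(nat \<Rightarrow> real \<times> nat) \<Rightarrow> nat \<Rightarrow> nat \<Rightarrow> real \<Rightarrow> real" where
  "NA xs n j t = (\<Sum>i\<in>{i. i < n \<and> fst (xs i) \<le> t \<and> snd (xs i) = j}.
      1 / real (card {k. k < n \<and> fst (xs k) \<ge> fst (xs i)}))"

definition NA_tot :: "(nat \<Rightarrow> real \<times> nat) \<Rightarrow> nat \<Rightarrow> nat \<Rightarrow> real \<Rightarrow> real" where
  "NA_tot xs n d t = (\<Sum>j\<in>{1..d}. NA xs n j t)"

definition NAmat :: "(nat \<Rightarrow> real \<times> nat) \<Rightarrow> nat \<Rightarrow> nat \<Rightarrow> real \<Rightarrow> real mat" where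
  "NAmat xs n d t = mat (d+1) (d+1) (\<lambda>(i,k).
      if i = 0 then (if k = 0 then - NA_tot xs n d t else NA xs n k t)
      else 0)"

definition NAjump :: "(nat \<Rightarrow> real \<times> nat) \<Rightarrow> nat \<Rightarrow> nat \<Rightarrow> real \<Rightarrow> real mat" where
  "NAjump xs n d s = mat (d+1) (d+1) (\<lambda>(i,k).
      NAmat xs n d s $$ (i,k) - left_lim (\<lambda>u. NAmat xs n d u $$ (i,k)) s)"

definition NA_jumps :: "(nat \<Rightarrow> real \<times> nat) \<Rightarrow> nat \<Rightarrow> nat \<Rightarrow> real \<Rightarrow> real set" where
  "NA_jumps xs n d t = {s. 0 < s \<and> s \<le> t \<and> NAjump xs n d s \<noteq> 0\<^sub>m (d+1) (d+1)}"

definition AJ :: "(nat \<Rightarrow> real \<times> nat) \<Rightarrow> nat \<Rightarrow> nat \<Rightarrow> real \<Rightarrow> real mat" where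
  "AJ xs n d t = foldl (\<lambda>A s. A * (1\<^sub>m (d+1) + NAjump xs n d s)) (1\<^sub>m (d+1))
      (sorted_list_of_set (NA_jumps xs n d t))"

definition consistent :: "'a measure \<Rightarrow> (nat \<Rightarrow> 'a \<Rightarrow> real) \<Rightarrow> real \<Rightarrow> bool" where
  "consistent M est \<theta> \<longleftrightarrow>
     (\<forall>e>0. (\<lambda>n. measure M {\<omega> \<in> space M. e < \<bar>est n \<omega> - \<theta>\<bar>}) \<longlonglongrightarrow> 0)"

end

theory Submission
  imports Defs
begin

definition Yc :: "(nat \<Rightarrow> real \<times> nat) \<Rightarrow> nat \<Rightarrow> real \<Rightarrow> nat" where
  "Yc xs n s = card {k. k < n \<and> fst (xs k) \<ge> s}"
definition cnt :: "(nat \<Rightarrow> real \<times> nat) \<Rightarrow> nat \<Rightarrow> nat \<Rightarrow> real \<Rightarrow> nat" where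
  "cnt xs n j s = card {i. i < n \<and> fst (xs i) = s \<and> snd (xs i) = j}"
definition hz :: "(nat \<Rightarrow> real \<times> nat) \<Rightarrow> nat \<Rightarrow> nat \<Rightarrow> real \<Rightarrow> real" where
  "hz xs n j s = real (cnt xs n j s) / real (Yc xs n s)"
definition hzt :: "(nat \<Rightarrow> real \<times> nat) \<Rightarrow> nat \<Rightarrow> nat \<Rightarrow> real \<Rightarrow> real" where
  "hzt xs n d s = (\<Sum>j\<in>{1..d}. hz xs n j s)"
definition NAm :: "(nat \<Rightarrow> real \<times> nat) \<Rightarrow> nat \<Rightarrow> nat \<Rightarrow> real \<Rightarrow> real" where
  "NAm xs n j s = (\<Sum>i\<in>{i. i < n \<and> fst (xs i) < s \<and> snd (xs i) = j}.
      1 / real (card {k. k < n \<and> fst (xs k) \<ge> fst (xs i)}))"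

lemma left_lim_ev_const:
  assumes "s' < s" "\<And>u. s' < u \<Longrightarrow> u < s \<Longrightarrow> f u = c"
  shows "left_lim f s = c"
proof -
  have "eventually (\<lambda>u. f u = c) (at_left s)"
    using eventually_at_left_real[OF assms(1)] by eventually_elim (use assms(2) in auto)
  then have "(f \<longlongrightarrow> c) (at_left s)" by (rule tendsto_eventually)
  then show ?thesis unfolding left_lim_def by (rule tendsto_Lim[OF trivial_limit_at_left_real])
qed

lemma NA_left_const:
  "\<exists>s'<s. \<forall>u. s' < u \<and> u < s \<longrightarrow> (\<forall>j. NA xs n j u = NAm xs n j s)"
proof -
  define A where "A = {fst (xs i) |i. i < n \<and> fst (xs i) < s} \<union> {s - 1}"
  have fA: "finite A" unfolding A_def by auto
  define s' where "s' = Max A"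
  have "s' \<in> A" unfolding s'_def using fA A_def by (intro Max_in) auto
  then have "s' < s" unfolding A_def by auto
  moreover have "\<forall>u. s' < u \<and> u < s \<longrightarrow> (\<forall>j. NA xs n j u = NAm xs n j s)"
  proof (intro allI impI)
    fix u j assume u: "s' < u \<and> u < s"
    have le: "fst (xs i) \<le> s'" if "i < n" "fst (xs i) < s" for i
    proof -
      have "fst (xs i) \<in> A" unfolding A_def using that by auto
      then show ?thesis unfolding s'_def using fA by auto
    qed
    have "{i. i < n \<and> fst (xs i) \<le> u \<and> snd (xs i) = j} = {i. i < n \<and> fst (xs i) < s \<and> snd (xs i) = j}"
      using le u by force
    then show "NA xs n j u = NAm xs n j s" unfolding NA_def NAm_def by simp
  qed
  ultimately show ?thesis by blast
qed

lemma Yc_pos: "i < n \<Longrightarrow> fst (xs i) \<ge> s \<Longrightarrow> Yc xs n s > 0"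
  unfolding Yc_def by (subst card_gt_0_iff) auto

lemma NA_minus_NAm: "NA xs n j s - NAm xs n j s = hz xs n j s"
proof -
  have eq: "{i. i < n \<and> fst (xs i) \<le> s \<and> snd (xs i) = j} =
     {i. i < n \<and> fst (xs i) < s \<and> snd (xs i) = j} \<union> {i. i < n \<and> fst (xs i) = s \<and> snd (xs i) = j}"
    by auto
  have "NA xs n j s = NAm xs n j s + (\<Sum>i\<in>{i. i < n \<and> fst (xs i) = s \<and> snd (xs i) = j}.
      1 / real (card {k. k < n \<and> fst (xs k) \<ge> fst (xs i)}))"
    unfolding NA_def NAm_def eq by (subst sum.union_disjoint) auto
  also have "(\<Sum>i\<in>{i. i < n \<and> fst (xs i) = s \<and> snd (xs i) = j}.
      1 / real (card {k. k < n \<and> fst (xs k) \<ge> fst (xs i)})) =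
      (\<Sum>i\<in>{i. i < n \<and> fst (xs i) = s \<and> snd (xs i) = j}. 1 / real (Yc xs n s))"
    by (rule sum.cong) (auto simp: Yc_def)
  also have "\<dots> = hz xs n j s" unfolding hz_def cnt_def by simp
  finally show ?thesis by simp
qed

definition shapeMat :: "nat \<Rightarrow> real \<Rightarrow> (nat \<Rightarrow> real) \<Rightarrow> real mat" where
  "shapeMat d S F = mat (d+1) (d+1) (\<lambda>(i,k). if i = 0 then (if k = 0 then S else F k) else (if i = k then 1 else 0))"

lemma NAjump_eq: "NAjump xs n d s = mat (d+1) (d+1) (\<lambda>(i,k).
      if i = 0 then (if k = 0 then - hzt xs n d s else hz xs n k s) else 0)"
proof -
  obtain s' where s': "s' < s" "\<And>u. s' < u \<Longrightarrow> u < s \<Longrightarrow> (\<forall>j. NA xs n j u = NAm xs n j s)"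
    using NA_left_const[of s xs n] by blast
  show ?thesis
  proof (rule eq_matI)
    fix i k assume ik: "i < dim_row (mat (d+1) (d+1) (\<lambda>(i,k).
      if i = 0 then (if k = 0 then - hzt xs n d s else hz xs n k s) else 0 :: real))"
        "k < dim_col (mat (d+1) (d+1) (\<lambda>(i,k).
      if i = 0 then (if k = 0 then - hzt xs n d s else hz xs n k s) else 0 :: real))"
    then have ik': "i < d+1" "k < d+1" by auto
    define c where "c = (if i = 0 then (if k = 0 then - NA_tot xs n d s + (\<Sum>j\<in>{1..d}. NAm xs n j s) else NAm xs n k s) else 0)"
    have ll: "left_lim (\<lambda>u. NAmat xs n d u $$ (i,k)) s =
       (if i = 0 then (if k = 0 then - (\<Sum>j\<in>{1..d}. NAm xs n j s) else NAm xs n k s) else 0)"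
    proof (rule left_lim_ev_const[OF s'(1)])
      fix u assume "s' < u" "u < s"
      then have e: "\<And>j. NA xs n j u = NAm xs n j s" using s'(2) by blast
      show "NAmat xs n d u $$ (i,k) =
       (if i = 0 then (if k = 0 then - (\<Sum>j\<in>{1..d}. NAm xs n j s) else NAm xs n k s) else 0)"
        using ik' by (simp add: NAmat_def NA_tot_def e)
    qed
    show "NAjump xs n d s $$ (i,k) = mat (d+1) (d+1) (\<lambda>(i,k).
      if i = 0 then (if k = 0 then - hzt xs n d s else hz xs n k s) else 0) $$ (i,k)"
    proof -
      have "NAjump xs n d s $$ (i,k) = NAmat xs n d s $$ (i,k) -
       (if i = 0 then (if k = 0 then - (\<Sum>j\<in>{1..d}. NAm xs n j s) else NAm xs n k s) else 0)"
        using ik' by (simp add: NAjump_def ll)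
      then show ?thesis
        using ik' by (simp add: NAmat_def NA_tot_def hzt_def NA_minus_NAm[symmetric] sum_subtractf)
    qed
  qed (auto simp: NAjump_def)
qed

lemma shape_step:
  "shapeMat d S F * (1\<^sub>m (d+1) + NAjump xs n d s) =
     shapeMat d (S * (1 - hzt xs n d s)) (\<lambda>k. F k + S * hz xs n k s)"
proof (rule eq_matI)
  fix i k assume "i < dim_row (shapeMat d (S * (1 - hzt xs n d s)) (\<lambda>k. F k + S * hz xs n k s))"
    "k < dim_col (shapeMat d (S * (1 - hzt xs n d s)) (\<lambda>k. F k + S * hz xs n k s))"
  then have ik: "i < d+1" "k < d+1" by (auto simp: shapeMat_def)
  have "(shapeMat d S F * (1\<^sub>m (d+1) + NAjump xs n d s)) $$ (i,k) =
     (\<Sum>l = 0..<d+1. shapeMat d S F $$ (i,l) * (1\<^sub>m (d+1) + NAjump xs n d s) $$ (l,k))"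
    using ik by (simp add: scalar_prod_def shapeMat_def NAjump_eq)
  also have "\<dots> = (\<Sum>l = 0..<d+1. (if i = 0 then (if l = 0 then S else F l) else (if i = l then 1 else 0)) *
      ((if l = k then 1 else 0) + (if l = 0 then (if k = 0 then - hzt xs n d s else hz xs n k s) else 0)))"
    using ik by (intro sum.cong) (auto simp: shapeMat_def NAjump_eq)
  also have "\<dots> = shapeMat d (S * (1 - hzt xs n d s)) (\<lambda>k. F k + S * hz xs n k s) $$ (i,k)"
  proof (cases "i = 0")
    case True
    have "(\<Sum>l = 0..<d+1. (if l = 0 then S else F l) *
      ((if l = k then 1 else 0) + (if l = 0 then (if k = 0 then - hzt xs n d s else hz xs n k s) else 0))) =
      (\<Sum>l = 0..<d+1. (if l = k then (if l = 0 then S else F l) else 0) +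
         (if l = 0 then S * (if k = 0 then - hzt xs n d s else hz xs n k s) else 0))"
      by (intro sum.cong) (auto simp: algebra_simps)
    also have "\<dots> = (if k = 0 then S else F k) + S * (if k = 0 then - hzt xs n d s else hz xs n k s)"
      using ik by (simp add: sum.distrib)
    finally show ?thesis using True ik by (auto simp: shapeMat_def algebra_simps)
  next
    case False
    have "(\<Sum>l = 0..<d+1. (if i = l then 1 else 0) *
      ((if l = k then 1 else 0) + (if l = 0 then (if k = 0 then - hzt xs n d s else hz xs n k s) else 0))) =
      (\<Sum>l = 0..<d+1. (if l = i then (if i = k then 1 else 0) else 0))"
      using False by (intro sum.cong) auto
    also have "\<dots> = (if i = k then 1 else 0)" using ik by simp
    finally show ?thesis using False ik by (auto simp: shapeMat_def)
  qed
  finally show "(shapeMat d S F * (1\<^sub>m (d+1) + NAjump xs n d s)) $$ (i,k) =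
      shapeMat d (S * (1 - hzt xs n d s)) (\<lambda>k. F k + S * hz xs n k s) $$ (i,k)" .
qed (auto simp: shapeMat_def NAjump_def)

definition stepS :: "(nat \<Rightarrow> real \<times> nat) \<Rightarrow> nat \<Rightarrow> nat \<Rightarrow> real \<times> (nat \<Rightarrow> real) \<Rightarrow> real \<Rightarrow> real \<times> (nat \<Rightarrow> real)" where
  "stepS xs n d SF s = (fst SF * (1 - hzt xs n d s), \<lambda>k. snd SF k + fst SF * hz xs n k s)"

lemma foldl_shape:
  "foldl (\<lambda>A s. A * (1\<^sub>m (d+1) + NAjump xs n d s)) (shapeMat d S F) L =
     shapeMat d (fst (foldl (stepS xs n d) (S,F) L)) (snd (foldl (stepS xs n d) (S,F) L))"
  by (induction L arbitrary: S F) (auto simp: shape_step[simplified] stepS_def)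

lemma one_shape: "1\<^sub>m (d+1) = shapeMat d 1 (\<lambda>_. 0)"
  by (rule eq_matI) (auto simp: shapeMat_def)

definition Jall :: "(nat \<Rightarrow> real \<times> nat) \<Rightarrow> nat \<Rightarrow> nat \<Rightarrow> real set" where
  "Jall xs n d = {fst (xs i) |i. i < n \<and> 0 < fst (xs i) \<and> snd (xs i) \<in> {1..d}}"
definition Prd :: "(nat \<Rightarrow> real \<times> nat) \<Rightarrow> nat \<Rightarrow> nat \<Rightarrow> real set \<Rightarrow> real" where
  "Prd xs n d A = (\<Prod>s\<in>A. 1 - hzt xs n d s)"
definition Fh :: "(nat \<Rightarrow> real \<times> nat) \<Rightarrow> nat \<Rightarrow> nat \<Rightarrow> nat \<Rightarrow> real \<Rightarrow> real" where
  "Fh xs n d k t = (\<Sum>s\<in>Jall xs n d \<inter> {..t}. Prd xs n d (Jall xs n d \<inter> {..<s}) * hz xs n k s)"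
definition Sh :: "(nat \<Rightarrow> real \<times> nat) \<Rightarrow> nat \<Rightarrow> nat \<Rightarrow> real \<Rightarrow> real" where
  "Sh xs n d t = Prd xs n d (Jall xs n d \<inter> {..t})"

lemma finite_Jall[simp]: "finite (Jall xs n d)"
  unfolding Jall_def by auto

lemma cnt_pos_iff: "cnt xs n k s > 0 \<longleftrightarrow> (\<exists>i<n. fst (xs i) = s \<and> snd (xs i) = k)"
  unfolding cnt_def by (subst card_gt_0_iff) auto

lemma hz_nonneg: "hz xs n k s \<ge> 0"
  unfolding hz_def by simp

lemma hz_ne0_iff: "hz xs n k s \<noteq> 0 \<longleftrightarrow> (\<exists>i<n. fst (xs i) = s \<and> snd (xs i) = k)"
proof
  assume "hz xs n k s \<noteq> 0"
  then have "cnt xs n k s \<noteq> 0" unfolding hz_def by auto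
  then show "\<exists>i<n. fst (xs i) = s \<and> snd (xs i) = k" using cnt_pos_iff by blast
next
  assume h: "\<exists>i<n. fst (xs i) = s \<and> snd (xs i) = k"
  then have "cnt xs n k s > 0" using cnt_pos_iff by blast
  moreover from h have "Yc xs n s > 0" using Yc_pos by fastforce
  ultimately show "hz xs n k s \<noteq> 0" unfolding hz_def by auto
qed

lemma sum_cnt_le: "(\<Sum>k\<in>{1..d}. cnt xs n k s) \<le> Yc xs n s"
proof -
  have "(\<Sum>k\<in>{1..d}. cnt xs n k s) = card (\<Union>k\<in>{1..d}. {i. i < n \<and> fst (xs i) = s \<and> snd (xs i) = k})"
    unfolding cnt_def by (subst card_UN_disjoint) auto
  also have "\<dots> \<le> Yc xs n s" unfolding Yc_def by (intro card_mono) auto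
  finally show ?thesis .
qed

lemma hzt_le1: "hzt xs n d s \<le> 1"
proof (cases "Yc xs n s = 0")
  case True then show ?thesis by (simp add: hzt_def hz_def)
next
  case False
  have "hzt xs n d s = real (\<Sum>k\<in>{1..d}. cnt xs n k s) / real (Yc xs n s)"
    unfolding hzt_def hz_def by (simp add: sum_divide_distrib)
  also have "\<dots> \<le> 1"
  proof -
    have "real (\<Sum>k\<in>{1..d}. cnt xs n k s) \<le> real (Yc xs n s)"
      using sum_cnt_le[where d=d and xs=xs and n=n and s=s] by linarith
    then show ?thesis using False by simp
  qed
  finally show ?thesis .
qed

lemma hzt_nonneg: "hzt xs n d s \<ge> 0"
  unfolding hzt_def by (simp add: sum_nonneg hz_nonneg)

lemma NA_jumps_eq: "NA_jumps xs n d t = Jall xs n d \<inter> {..t}"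
proof -
  have "NAjump xs n d s \<noteq> 0\<^sub>m (d+1) (d+1) \<longleftrightarrow> (\<exists>k\<in>{1..d}. hz xs n k s \<noteq> 0)" for s
  proof
    assume a: "NAjump xs n d s \<noteq> 0\<^sub>m (d+1) (d+1)"
    show "\<exists>k\<in>{1..d}. hz xs n k s \<noteq> 0"
    proof (rule ccontr)
      assume "\<not> (\<exists>k\<in>{1..d}. hz xs n k s \<noteq> 0)"
      then have z: "\<And>k. k \<in> {1..d} \<Longrightarrow> hz xs n k s = 0" by auto
      then have h0: "hzt xs n d s = 0" unfolding hzt_def by simp
      have "NAjump xs n d s = 0\<^sub>m (d+1) (d+1)"
        unfolding NAjump_eq by (intro eq_matI) (auto simp: z h0)
      with a show False by simp
    qed
  next
    assume "\<exists>k\<in>{1..d}. hz xs n k s \<noteq> 0"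
    then obtain k where k: "k \<in> {1..d}" "hz xs n k s \<noteq> 0" by blast
    then have "NAjump xs n d s $$ (0,k) \<noteq> 0" by (simp add: NAjump_eq)
    moreover have "0\<^sub>m (d+1) (d+1) $$ (0,k) = (0::real)" using k by simp
    ultimately show "NAjump xs n d s \<noteq> 0\<^sub>m (d+1) (d+1)" by metis
  qed
  then show ?thesis
    unfolding NA_jumps_def Jall_def by (auto simp: hz_ne0_iff)
qed

lemma prod_telescope_list:
  fixes g :: "real \<Rightarrow> real"
  assumes "sorted_wrt (<) L"
  shows "(\<Prod>s\<in>set L. 1 - g s) = 1 - (\<Sum>s\<in>set L. (\<Prod>s'\<in>set L \<inter> {..<s}. 1 - g s') * g s)"
  using assms
proof (induction L rule: rev_induct)
  case Nil then show ?case by simp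
next
  case (snoc x L)
  have lt: "\<forall>y\<in>set L. y < x" and sL: "sorted_wrt (<) L" using snoc.prems by (auto simp: sorted_wrt_append)
  then have xL: "x \<notin> set L" by auto
  have e1: "insert x (set L) \<inter> {..<s} = set L \<inter> {..<s}" if "s \<in> set L" for s
    using lt that by auto
  have e2: "insert x (set L) \<inter> {..<x} = set L" using lt by auto
  let ?f = "\<lambda>s. (\<Prod>s'\<in>insert x (set L) \<inter> {..<s}. 1 - g s') * g s"
  have h1: "(\<Sum>s\<in>set L. ?f s) = (\<Sum>s\<in>set L. (\<Prod>s'\<in>set L \<inter> {..<s}. 1 - g s') * g s)"
    by (intro sum.cong refl) (simp add: e1)
  have "(\<Sum>s\<in>insert x (set L). ?f s) = ?f x + (\<Sum>s\<in>set L. ?f s)"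
    using xL by (intro sum.insert) auto
  also have "?f x = (\<Prod>s'\<in>set L. 1 - g s') * g x" by (simp only: e2)
  finally have h2: "(\<Sum>s\<in>insert x (set L). ?f s) = (\<Prod>s'\<in>set L. 1 - g s') * g x +
      (\<Sum>s\<in>set L. (\<Prod>s'\<in>set L \<inter> {..<s}. 1 - g s') * g s)" using h1 by simp
  have h3: "(\<Prod>s\<in>insert x (set L). 1 - g s) = (1 - g x) * (\<Prod>s\<in>set L. 1 - g s)"
    using xL by (intro prod.insert) auto
  show ?case unfolding set_append set_simps Un_insert_right Un_empty_right h2 h3
    using snoc.IH[OF sL] by (simp add: algebra_simps)
qed

lemma prod_telescope:
  fixes g :: "real \<Rightarrow> real"
  assumes "finite A"
  shows "(\<Prod>s\<in>A. 1 - g s) = 1 - (\<Sum>s\<in>A. (\<Prod>s'\<in>A \<inter> {..<s}. 1 - g s') * g s)"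
  using prod_telescope_list[of "sorted_list_of_set A" g] assms by simp

lemma foldl_set:
  assumes "sorted_wrt (<) L"
  shows "foldl (stepS xs n d) (1, \<lambda>_. 0) L = ((\<Prod>s\<in>set L. 1 - hzt xs n d s),
     \<lambda>k. \<Sum>s\<in>set L. (\<Prod>s'\<in>set L \<inter> {..<s}. 1 - hzt xs n d s') * hz xs n k s)"
  using assms
proof (induction L rule: rev_induct)
  case Nil then show ?case by simp
next
  case (snoc x L)
  have lt: "\<forall>y\<in>set L. y < x" and sL: "sorted_wrt (<) L" using snoc.prems by (auto simp: sorted_wrt_append)
  then have xL: "x \<notin> set L" by auto
  have e1: "insert x (set L) \<inter> {..<s} = set L \<inter> {..<s}" if "s \<in> set L" for s
    using lt that by auto
  have e2: "insert x (set L) \<inter> {..<x} = set L" using lt by auto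
  have "(\<Sum>s\<in>set L. (\<Prod>s'\<in>insert x (set L) \<inter> {..<s}. 1 - hzt xs n d s') * hz xs n k s) =
     (\<Sum>s\<in>set L. (\<Prod>s'\<in>set L \<inter> {..<s}. 1 - hzt xs n d s') * hz xs n k s)" for k
    by (intro sum.cong refl) (simp add: e1)
  then show ?case using snoc.IH[OF sL] xL
    by (auto simp: stepS_def e2 algebra_simps)
qed

lemma AJ_eq: "AJ xs n d t = shapeMat d (Sh xs n d t) (\<lambda>k. Fh xs n d k t)"
proof -
  let ?L = "sorted_list_of_set (Jall xs n d \<inter> {..t})"
  have sL: "sorted_wrt (<) ?L" by (rule strict_sorted_list_of_set)
  have e: "(Jall xs n d \<inter> {..t}) \<inter> {..<s} = Jall xs n d \<inter> {..<s}" if "s \<in> Jall xs n d \<inter> {..t}" for s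
    using that by auto
  have "AJ xs n d t = foldl (\<lambda>A s. A * (1\<^sub>m (d+1) + NAjump xs n d s)) (shapeMat d 1 (\<lambda>_. 0)) ?L"
    by (simp add: AJ_def NA_jumps_eq one_shape[symmetric])
  also have "\<dots> = shapeMat d (\<Prod>s\<in>Jall xs n d \<inter> {..t}. 1 - hzt xs n d s)
     (\<lambda>k. \<Sum>s\<in>Jall xs n d \<inter> {..t}. (\<Prod>s'\<in>(Jall xs n d \<inter> {..t}) \<inter> {..<s}. 1 - hzt xs n d s') * hz xs n k s)"
    unfolding foldl_shape foldl_set[OF sL] by simp
  also have "\<dots> = shapeMat d (Sh xs n d t) (\<lambda>k. Fh xs n d k t)"
  proof -
    have "(\<Sum>s\<in>Jall xs n d \<inter> {..t}. (\<Prod>s'\<in>(Jall xs n d \<inter> {..t}) \<inter> {..<s}. 1 - hzt xs n d s') * hz xs n k s)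
      = Fh xs n d k t" for k
      unfolding Fh_def Prd_def by (intro sum.cong refl) (simp only: e)
    then show ?thesis by (simp add: Sh_def Prd_def)
  qed
  finally show ?thesis .
qed

lemma AJ_00: "AJ xs n d t $$ (0,0) = Sh xs n d t"
  by (simp add: AJ_eq shapeMat_def)
lemma AJ_0k: "k \<in> {1..d} \<Longrightarrow> AJ xs n d t $$ (0,k) = Fh xs n d k t"
  by (simp add: AJ_eq shapeMat_def)
lemma AJ_ik: "0 < i \<Longrightarrow> i < d+1 \<Longrightarrow> k < d+1 \<Longrightarrow> AJ xs n d t $$ (i,k) = (if i = k then 1 else 0)"
  by (simp add: AJ_eq shapeMat_def)

lemma Prd_bounds:
  assumes "finite A"
  shows "0 \<le> Prd xs n d A" "Prd xs n d A \<le> 1" "1 - (\<Sum>s\<in>A. hzt xs n d s) \<le> Prd xs n d A"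
proof -
  show "0 \<le> Prd xs n d A" unfolding Prd_def
    by (intro prod_nonneg) (use hzt_le1 in auto)
  show "Prd xs n d A \<le> 1" unfolding Prd_def
    by (intro prod_le_1) (use hzt_le1 hzt_nonneg in auto)
  show "1 - (\<Sum>s\<in>A. hzt xs n d s) \<le> Prd xs n d A" unfolding Prd_def
    by (rule Weierstrass_prod_ineq) (use hzt_le1 hzt_nonneg in auto)
qed

lemma Sh_bounds: "0 \<le> Sh xs n d t" "Sh xs n d t \<le> 1"
  unfolding Sh_def using Prd_bounds by auto

lemma row_sum: "Sh xs n d t + (\<Sum>k\<in>{1..d}. Fh xs n d k t) = 1"
proof -
  let ?J = "Jall xs n d \<inter> {..t}"
  have e: "?J \<inter> {..<s} = Jall xs n d \<inter> {..<s}" if "s \<in> ?J" for s using that by auto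
  have "(\<Sum>k\<in>{1..d}. Fh xs n d k t) = (\<Sum>s\<in>?J. Prd xs n d (Jall xs n d \<inter> {..<s}) * hzt xs n d s)"
    unfolding Fh_def hzt_def by (subst sum.swap) (simp add: sum_distrib_left)
  also have "\<dots> = (\<Sum>s\<in>?J. (\<Prod>s'\<in>?J \<inter> {..<s}. 1 - hzt xs n d s') * hzt xs n d s)"
    by (intro sum.cong) (auto simp: Prd_def e)
  also have "\<dots> = 1 - Sh xs n d t"
    using prod_telescope[of ?J "hzt xs n d"] by (simp add: Sh_def Prd_def)
  finally show ?thesis by simp
qed


definition Nop :: "(nat \<Rightarrow> real \<times> nat) \<Rightarrow> nat \<Rightarrow> nat \<Rightarrow> real \<Rightarrow> real \<Rightarrow> nat" where
  "Nop xs n k a b = card {i. i < n \<and> a < fst (xs i) \<and> fst (xs i) < b \<and> snd (xs i) = k}"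
definition Yp :: "(nat \<Rightarrow> real \<times> nat) \<Rightarrow> nat \<Rightarrow> real \<Rightarrow> nat" where
  "Yp xs n a = card {i. i < n \<and> a < fst (xs i)}"

lemma hz_zero_notin:
  assumes "0 < b" "k \<in> {1..d}" "b \<notin> Jall xs n d"
  shows "hz xs n k b = 0"
  using assms hz_ne0_iff[of xs n k b] unfolding Jall_def by auto

lemma Fh_cell:
  assumes "0 \<le> a" "a < b" "k \<in> {1..d}"
  shows "Fh xs n d k b = Fh xs n d k a + Sh xs n d a *
     ((\<Sum>s\<in>Jall xs n d \<inter> {a<..<b}. Prd xs n d (Jall xs n d \<inter> {a<..<b} \<inter> {..<s}) * hz xs n k s)
      + Prd xs n d (Jall xs n d \<inter> {a<..<b}) * hz xs n k b)"
proof -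
  define J where "J = Jall xs n d"
  define A where "A = J \<inter> {a<..<b}"
  define g where "g s = Prd xs n d (J \<inter> {..<s}) * hz xs n k s" for s
  have fJ: "finite J" unfolding J_def by simp
  have split: "J \<inter> {..b} = (J \<inter> {..a}) \<union> A \<union> (J \<inter> {b})" unfolding A_def using assms by auto
  have "Fh xs n d k b = sum g (J \<inter> {..a}) + sum g A + sum g (J \<inter> {b})"
    unfolding Fh_def g_def[symmetric] J_def[symmetric] split using fJ assms
    by (subst sum.union_disjoint; (auto simp: A_def)?)+
  moreover have "sum g (J \<inter> {..a}) = Fh xs n d k a" unfolding Fh_def g_def J_def ..
  moreover have "sum g A = Sh xs n d a * (\<Sum>s\<in>A. Prd xs n d (A \<inter> {..<s}) * hz xs n k s)"
  proof -
    have "g s = Sh xs n d a * (Prd xs n d (A \<inter> {..<s}) * hz xs n k s)" if "s \<in> A" for s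
    proof -
      have "J \<inter> {..<s} = (J \<inter> {..a}) \<union> (A \<inter> {..<s})" using that unfolding A_def by auto
      then have "Prd xs n d (J \<inter> {..<s}) = Sh xs n d a * Prd xs n d (A \<inter> {..<s})"
        unfolding Prd_def Sh_def J_def[symmetric] using fJ
        by (simp add: prod.union_disjoint A_def disjoint_iff)
      then show ?thesis unfolding g_def by simp
    qed
    then show ?thesis by (simp add: sum_distrib_left)
  qed
  moreover have "sum g (J \<inter> {b}) = Sh xs n d a * (Prd xs n d A * hz xs n k b)"
  proof (cases "b \<in> J")
    case True
    then have e: "J \<inter> {b} = {b}" by auto
    have "J \<inter> {..<b} = (J \<inter> {..a}) \<union> A" unfolding A_def using assms by auto
    then have "Prd xs n d (J \<inter> {..<b}) = Sh xs n d a * Prd xs n d A"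
      unfolding Prd_def Sh_def J_def[symmetric] using fJ
      by (simp add: prod.union_disjoint A_def disjoint_iff)
    then show ?thesis unfolding e g_def by simp
  next
    case False
    then have "hz xs n k b = 0" using hz_zero_notin[of b k d xs n] assms unfolding J_def by auto
    moreover have "J \<inter> {b} = {}" using False by auto
    ultimately show ?thesis by simp
  qed
  ultimately show ?thesis unfolding A_def J_def by (simp add: algebra_simps)
qed

lemma xo_obs:
  assumes "0 \<le> a" "k \<in> {1..d}"
  shows "(\<Sum>s\<in>Jall xs n d \<inter> {a<..<b}. hz xs n k s) =
    (\<Sum>i\<in>{i. i < n \<and> a < fst (xs i) \<and> fst (xs i) < b \<and> snd (xs i) = k}. 1 / real (Yc xs n (fst (xs i))))"
proof -
  define I where "I = {i. i < n \<and> a < fst (xs i) \<and> fst (xs i) < b \<and> snd (xs i) = k}"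
  have sub: "(\<lambda>i. fst (xs i)) ` I \<subseteq> Jall xs n d \<inter> {a<..<b}"
    unfolding I_def Jall_def using assms by auto
  have "hz xs n k s = (\<Sum>i\<in>{i \<in> I. fst (xs i) = s}. 1 / real (Yc xs n (fst (xs i))))"
    if "s \<in> Jall xs n d \<inter> {a<..<b}" for s
  proof -
    have "{i \<in> I. fst (xs i) = s} = {i. i < n \<and> fst (xs i) = s \<and> snd (xs i) = k}"
      using that unfolding I_def by auto
    then show ?thesis unfolding hz_def cnt_def by simp
  qed
  then have "(\<Sum>s\<in>Jall xs n d \<inter> {a<..<b}. hz xs n k s) =
     (\<Sum>s\<in>Jall xs n d \<inter> {a<..<b}. \<Sum>i\<in>{i \<in> I. fst (xs i) = s}. 1 / real (Yc xs n (fst (xs i))))"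
    by (intro sum.cong) auto
  also have "\<dots> = (\<Sum>i\<in>I. 1 / real (Yc xs n (fst (xs i))))"
    by (rule sum.group) (use sub in \<open>auto simp: I_def\<close>)
  finally show ?thesis unfolding I_def .
qed

lemma xo_bounds:
  assumes "0 \<le> a" "k \<in> {1..d}"
  shows "real (Nop xs n k a b) / real (Yp xs n a) \<le> (\<Sum>s\<in>Jall xs n d \<inter> {a<..<b}. hz xs n k s)"
    "(\<Sum>s\<in>Jall xs n d \<inter> {a<..<b}. hz xs n k s) \<le> real (Nop xs n k a b) / max 1 (real (Yc xs n b))"
proof -
  define I where "I = {i. i < n \<and> a < fst (xs i) \<and> fst (xs i) < b \<and> snd (xs i) = k}"
  have fI: "finite I" unfolding I_def by auto
  have b1: "1 / real (Yp xs n a) \<le> 1 / real (Yc xs n (fst (xs i)))" if "i \<in> I" for i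
  proof -
    have pos: "Yc xs n (fst (xs i)) > 0" using that Yc_pos[of i n "fst (xs i)" xs] unfolding I_def by auto
    have "Yc xs n (fst (xs i)) \<le> Yp xs n a" unfolding Yc_def Yp_def
      using that unfolding I_def by (intro card_mono) auto
    then show ?thesis using pos by (simp add: frac_le)
  qed
  have b2: "1 / real (Yc xs n (fst (xs i))) \<le> 1 / max 1 (real (Yc xs n b))" if "i \<in> I" for i
  proof -
    have pos: "Yc xs n (fst (xs i)) > 0" using that Yc_pos[of i n "fst (xs i)" xs] unfolding I_def by auto
    have "Yc xs n b \<le> Yc xs n (fst (xs i))" unfolding Yc_def
      using that unfolding I_def by (intro card_mono) auto
    then have "max 1 (real (Yc xs n b)) \<le> real (Yc xs n (fst (xs i)))" using pos by simp
    then show ?thesis using pos by (simp add: frac_le)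
  qed
  have "(\<Sum>i\<in>I. 1 / real (Yp xs n a)) \<le> (\<Sum>i\<in>I. 1 / real (Yc xs n (fst (xs i))))"
    by (rule sum_mono) (rule b1)
  then show "real (Nop xs n k a b) / real (Yp xs n a) \<le> (\<Sum>s\<in>Jall xs n d \<inter> {a<..<b}. hz xs n k s)"
    unfolding xo_obs[OF assms] I_def[symmetric] by (simp add: Nop_def I_def)
  have "(\<Sum>i\<in>I. 1 / real (Yc xs n (fst (xs i)))) \<le> (\<Sum>i\<in>I. 1 / max 1 (real (Yc xs n b)))"
    by (rule sum_mono) (rule b2)
  then show "(\<Sum>s\<in>Jall xs n d \<inter> {a<..<b}. hz xs n k s) \<le> real (Nop xs n k a b) / max 1 (real (Yc xs n b))"
    unfolding xo_obs[OF assms] I_def[symmetric] by (simp add: Nop_def I_def)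
qed


lemma cell_ineq:
  assumes "0 \<le> a" "a < b"
  shows "\<exists>W. (\<forall>k\<in>{1..d}. Fh xs n d k b = Fh xs n d k a + Sh xs n d a * W k \<and> 0 \<le> W k \<and>
      W k \<le> real (Nop xs n k a b) / max 1 (real (Yc xs n b)) + real (cnt xs n k b) / real (Yc xs n b) \<and>
      (1 - (\<Sum>k'\<in>{1..d}. real (Nop xs n k' a b) / max 1 (real (Yc xs n b)))) *
        (real (Nop xs n k a b) / real (Yp xs n a) + real (cnt xs n k b) / real (Yc xs n b)) \<le> W k)
      \<and> (\<Sum>k\<in>{1..d}. W k) \<le> 1"
proof -
  define A where "A = Jall xs n d \<inter> {a<..<b}"
  have fA: "finite A" unfolding A_def by simp
  define W where "W k = (\<Sum>s\<in>A. Prd xs n d (A \<inter> {..<s}) * hz xs n k s) + Prd xs n d A * hz xs n k b" for k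
  define x where "x = (\<Sum>s\<in>A. hzt xs n d s)"
  define xo where "xo k = (\<Sum>s\<in>A. hz xs n k s)" for k
  define xp where "xp = (\<Sum>k'\<in>{1..d}. real (Nop xs n k' a b) / max 1 (real (Yc xs n b)))"
  have x_eq: "x = (\<Sum>k\<in>{1..d}. xo k)" unfolding x_def xo_def hzt_def by (rule sum.swap)
  have x_le: "x \<le> xp" unfolding x_eq xp_def xo_def A_def
    by (intro sum_mono xo_bounds(2)) (use assms in auto)
  have x_nn: "0 \<le> x" unfolding x_def by (intro sum_nonneg hzt_nonneg)
  have Pl: "1 - x \<le> Prd xs n d (A \<inter> {..<s})" for s
  proof -
    have "(\<Sum>s\<in>A \<inter> {..<s}. hzt xs n d s) \<le> x" unfolding x_def
      by (rule sum_mono2) (use fA hzt_nonneg in auto)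
    then show ?thesis using Prd_bounds(3)[of "A \<inter> {..<s}" xs n d] fA by simp
  qed
  have PA: "1 - x \<le> Prd xs n d A" using Prd_bounds(3)[of A xs n d] fA unfolding x_def by simp
  have P1: "Prd xs n d B \<le> 1" "0 \<le> Prd xs n d B" if "B \<subseteq> A" for B
    using Prd_bounds[of B xs n d] fA that finite_subset by auto
  have Wk: "(1 - x) * (xo k + hz xs n k b) \<le> W k \<and> W k \<le> xo k + hz xs n k b \<and> 0 \<le> W k" for k
  proof -
    have t1: "(1 - x) * hz xs n k s \<le> Prd xs n d (A \<inter> {..<s}) * hz xs n k s" for s
      by (intro mult_right_mono Pl hz_nonneg)
    have t2: "Prd xs n d (A \<inter> {..<s}) * hz xs n k s \<le> hz xs n k s" for s
      using P1[of "A \<inter> {..<s}"] hz_nonneg[of xs n k s] by (simp add: mult_left_le_one_le)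
    have t3: "(1 - x) * hz xs n k b \<le> Prd xs n d A * hz xs n k b"
      by (intro mult_right_mono PA hz_nonneg)
    have t4: "Prd xs n d A * hz xs n k b \<le> hz xs n k b"
      using P1[of A] hz_nonneg[of xs n k b] by (simp add: mult_left_le_one_le)
    have "(1 - x) * xo k \<le> (\<Sum>s\<in>A. Prd xs n d (A \<inter> {..<s}) * hz xs n k s)"
      unfolding xo_def sum_distrib_left by (rule sum_mono) (rule t1)
    moreover have "(\<Sum>s\<in>A. Prd xs n d (A \<inter> {..<s}) * hz xs n k s) \<le> xo k"
      unfolding xo_def by (rule sum_mono) (rule t2)
    moreover have "0 \<le> (\<Sum>s\<in>A. Prd xs n d (A \<inter> {..<s}) * hz xs n k s)"
      by (intro sum_nonneg mult_nonneg_nonneg P1 hz_nonneg) auto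
    moreover have "0 \<le> Prd xs n d A * hz xs n k b" by (intro mult_nonneg_nonneg P1 hz_nonneg) auto
    ultimately show ?thesis unfolding W_def using t3 t4 by (simp add: algebra_simps)
  qed
  have sumW: "(\<Sum>k\<in>{1..d}. W k) \<le> 1"
  proof -
    have "(\<Sum>k\<in>{1..d}. W k) = (\<Sum>s\<in>A. Prd xs n d (A \<inter> {..<s}) * hzt xs n d s) + Prd xs n d A * hzt xs n d b"
      unfolding W_def hzt_def sum.distrib sum_distrib_left by (subst sum.swap) simp
    also have "(\<Sum>s\<in>A. Prd xs n d (A \<inter> {..<s}) * hzt xs n d s) = 1 - Prd xs n d A"
      using prod_telescope[OF fA, of "hzt xs n d"] unfolding Prd_def by simp
    finally show ?thesis using P1[of A] hzt_le1[of xs n d b] mult_left_mono[of "hzt xs n d b" 1 "Prd xs n d A"] by simp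
  qed
  show ?thesis unfolding xp_def[symmetric]
  proof (intro exI[of _ W] conjI ballI)
    fix k assume k: "k \<in> {1..d}"
    show "Fh xs n d k b = Fh xs n d k a + Sh xs n d a * W k"
      unfolding W_def A_def by (rule Fh_cell[OF assms k])
    show "0 \<le> W k" using Wk by blast
    have lo1: "real (Nop xs n k a b) / real (Yp xs n a) \<le> xo k"
      unfolding xo_def A_def by (rule xo_bounds(1)[OF assms(1) k])
    have hi1: "xo k \<le> real (Nop xs n k a b) / max 1 (real (Yc xs n b))"
      unfolding xo_def A_def by (rule xo_bounds(2)[OF assms(1) k])
    show "W k \<le> real (Nop xs n k a b) / max 1 (real (Yc xs n b)) + real (cnt xs n k b) / real (Yc xs n b)"
      using Wk[of k] hi1 unfolding hz_def by linarith
    have lonn: "0 \<le> real (Nop xs n k a b) / real (Yp xs n a) + real (cnt xs n k b) / real (Yc xs n b)" by simp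
    have lole: "real (Nop xs n k a b) / real (Yp xs n a) + real (cnt xs n k b) / real (Yc xs n b) \<le> xo k + hz xs n k b"
      using lo1 unfolding hz_def by simp
    show "(1 - xp) * (real (Nop xs n k a b) / real (Yp xs n a) + real (cnt xs n k b) / real (Yc xs n b)) \<le> W k"
    proof (cases "1 - xp \<ge> 0")
      case True
      have "(1 - xp) * (real (Nop xs n k a b) / real (Yp xs n a) + real (cnt xs n k b) / real (Yc xs n b))
          \<le> (1 - xp) * (xo k + hz xs n k b)" by (rule mult_left_mono[OF lole True])
      also have "\<dots> \<le> (1 - x) * (xo k + hz xs n k b)"
        using x_le lonn lole by (intro mult_right_mono) linarith+
      finally show ?thesis using Wk[of k] by linarith
    next
      case False
      then have "(1 - xp) * (real (Nop xs n k a b) / real (Yp xs n a) + real (cnt xs n k b) / real (Yc xs n b)) \<le> 0"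
        using lonn by (simp add: mult_nonpos_nonneg)
      then show ?thesis using Wk[of k] by linarith
    qed
  qed (use sumW in simp)
qed

context prob_space
begin

lemma measure_le_sub:
  assumes "C \<in> sets M" "A \<subseteq> C"
  shows "measure M A \<le> measure M C"
proof (cases "A \<in> sets M")
  case True then show ?thesis using assms by (intro finite_measure_mono) auto
next
  case False then show ?thesis by (simp add: measure_notin_sets)
qed

lemma consistent_const: "consistent M (\<lambda>n \<omega>. c) c"
  unfolding consistent_def by simp

lemma consistent_squeeze:
  assumes "\<And>e. e > 0 \<Longrightarrow> eventually (\<lambda>n. measure M {\<omega>\<in>space M. e < \<bar>X n \<omega> - x\<bar>} \<le> f e n) sequentially"
    and "\<And>e. e > 0 \<Longrightarrow> f e \<longlonglongrightarrow> 0"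
  shows "consistent M X x"
  unfolding consistent_def
proof (intro allI impI)
  fix e :: real assume e: "e > 0"
  show "(\<lambda>n. measure M {\<omega>\<in>space M. e < \<bar>X n \<omega> - x\<bar>}) \<longlonglongrightarrow> 0"
    by (rule real_tendsto_sandwich[of "\<lambda>_. 0" _ _ "f e"]) (use assms e in auto)
qed

lemma consistent_binop:
  fixes f :: "real \<Rightarrow> real \<Rightarrow> real"
  assumes X: "consistent M X x" and Y: "consistent M Y y"
    and mX[measurable]: "\<And>n. X n \<in> borel_measurable M" and mY[measurable]: "\<And>n. Y n \<in> borel_measurable M"
    and cont: "\<And>e. e > 0 \<Longrightarrow> \<exists>d>0. \<forall>u v. \<bar>u - x\<bar> \<le> d \<and> \<bar>v - y\<bar> \<le> d \<longrightarrow> \<bar>f u v - f x y\<bar> \<le> e"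
  shows "consistent M (\<lambda>n \<omega>. f (X n \<omega>) (Y n \<omega>)) (f x y)"
  unfolding consistent_def
proof (intro allI impI)
  fix e :: real assume e: "e > 0"
  obtain d where d: "d > 0" "\<And>u v. \<bar>u - x\<bar> \<le> d \<Longrightarrow> \<bar>v - y\<bar> \<le> d \<Longrightarrow> \<bar>f u v - f x y\<bar> \<le> e"
    using cont[OF e] by blast
  let ?g = "\<lambda>n. measure M {\<omega>\<in>space M. d < \<bar>X n \<omega> - x\<bar>} + measure M {\<omega>\<in>space M. d < \<bar>Y n \<omega> - y\<bar>}"
  show "(\<lambda>n. measure M {\<omega>\<in>space M. e < \<bar>f (X n \<omega>) (Y n \<omega>) - f x y\<bar>}) \<longlonglongrightarrow> 0"
  proof (rule real_tendsto_sandwich[of "\<lambda>_. 0" _ _ ?g])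
    show "eventually (\<lambda>n. measure M {\<omega>\<in>space M. e < \<bar>f (X n \<omega>) (Y n \<omega>) - f x y\<bar>} \<le> ?g n) sequentially"
    proof (intro always_eventually allI)
      fix n
      have "measure M {\<omega>\<in>space M. e < \<bar>f (X n \<omega>) (Y n \<omega>) - f x y\<bar>} \<le>
          measure M ({\<omega>\<in>space M. d < \<bar>X n \<omega> - x\<bar>} \<union> {\<omega>\<in>space M. d < \<bar>Y n \<omega> - y\<bar>})"
      proof (rule measure_le_sub)
        show "{\<omega>\<in>space M. d < \<bar>X n \<omega> - x\<bar>} \<union> {\<omega>\<in>space M. d < \<bar>Y n \<omega> - y\<bar>} \<in> sets M"
          by measurable
        show "{\<omega>\<in>space M. e < \<bar>f (X n \<omega>) (Y n \<omega>) - f x y\<bar>} \<subseteq>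
            {\<omega>\<in>space M. d < \<bar>X n \<omega> - x\<bar>} \<union> {\<omega>\<in>space M. d < \<bar>Y n \<omega> - y\<bar>}"
        proof safe
          fix \<omega> assume w: "\<omega> \<in> space M" "e < \<bar>f (X n \<omega>) (Y n \<omega>) - f x y\<bar>" "\<not> d < \<bar>Y n \<omega> - y\<bar>"
          show "d < \<bar>X n \<omega> - x\<bar>"
          proof (rule ccontr)
            assume "\<not> d < \<bar>X n \<omega> - x\<bar>"
            then have "\<bar>f (X n \<omega>) (Y n \<omega>) - f x y\<bar> \<le> e" using d(2) w(3) by simp
            then show False using w(2) by simp
          qed
        qed
      qed
      also have "\<dots> \<le> ?g n"
        by (rule measure_subadditive) measurable
      finally show "measure M {\<omega>\<in>space M. e < \<bar>f (X n \<omega>) (Y n \<omega>) - f x y\<bar>} \<le> ?g n" .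
    qed
    have g1: "(\<lambda>n. measure M {\<omega>\<in>space M. d < \<bar>X n \<omega> - x\<bar>}) \<longlonglongrightarrow> 0"
      using X[unfolded consistent_def, rule_format, OF d(1)] .
    have g2: "(\<lambda>n. measure M {\<omega>\<in>space M. d < \<bar>Y n \<omega> - y\<bar>}) \<longlonglongrightarrow> 0"
      using Y[unfolded consistent_def, rule_format, OF d(1)] .
    show "?g \<longlonglongrightarrow> 0" using tendsto_add[OF g1 g2] by simp
  qed auto
qed

lemma consistent_unop:
  fixes f :: "real \<Rightarrow> real"
  assumes X: "consistent M X x" and mX: "\<And>n. X n \<in> borel_measurable M"
    and cont: "isCont f x"
  shows "consistent M (\<lambda>n \<omega>. f (X n \<omega>)) (f x)"
proof -
  have "consistent M (\<lambda>n \<omega>. (\<lambda>u v. f u) (X n \<omega>) ((\<lambda>n \<omega>. 0) n \<omega>)) ((\<lambda>u v. f u) x 0)"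
  proof (rule consistent_binop[OF X consistent_const mX])
    fix e :: real assume e: "e > 0"
    obtain d where d: "d > 0" "\<And>u. \<bar>u - x\<bar> < d \<Longrightarrow> \<bar>f u - f x\<bar> < e"
      using cont e unfolding continuous_at_eps_delta dist_real_def by blast
    show "\<exists>d>0. \<forall>u v. \<bar>u - x\<bar> \<le> d \<and> \<bar>v - 0\<bar> \<le> d \<longrightarrow> \<bar>f u - f x\<bar> \<le> e"
      by (intro exI[of _ "d/2"]) (use d in \<open>auto intro: less_imp_le\<close>)
  qed auto
  then show ?thesis by simp
qed

lemma consistent_add:
  assumes "consistent M X x" "consistent M Y y" "\<And>n. X n \<in> borel_measurable M" "\<And>n. Y n \<in> borel_measurable M"
  shows "consistent M (\<lambda>n \<omega>. X n \<omega> + Y n \<omega>) (x + y)"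
proof (rule consistent_binop[OF assms, where f = "(+)"])
  fix e :: real assume "e > 0"
  then show "\<exists>d>0. \<forall>u v. \<bar>u - x\<bar> \<le> d \<and> \<bar>v - y\<bar> \<le> d \<longrightarrow> \<bar>u + v - (x + y)\<bar> \<le> e"
    by (intro exI[of _ "e/2"] conjI allI impI) (simp, arith)
qed

lemma consistent_mult:
  assumes "consistent M X x" "consistent M Y y" "\<And>n. X n \<in> borel_measurable M" "\<And>n. Y n \<in> borel_measurable M"
  shows "consistent M (\<lambda>n \<omega>. X n \<omega> * Y n \<omega>) (x * y)"
proof (rule consistent_binop[OF assms, where f = "(*)"])
  fix e :: real assume e: "e > 0"
  define c where "c = 1 + \<bar>x\<bar> + \<bar>y\<bar>"
  have c: "c > 0" unfolding c_def by simp
  define d where "d = min 1 (e / c)"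
  have d12: "d > 0" "d \<le> 1" using e c by (auto simp: d_def)
  have "d * c \<le> (e / c) * c" using c unfolding d_def by (intro mult_right_mono) auto
  also have "\<dots> = e" using c by simp
  finally have d: "d > 0" "d \<le> 1" "d * (1 + \<bar>x\<bar> + \<bar>y\<bar>) \<le> e" using d12 unfolding c_def by auto
  show "\<exists>d>0. \<forall>u v. \<bar>u - x\<bar> \<le> d \<and> \<bar>v - y\<bar> \<le> d \<longrightarrow> \<bar>u * v - x * y\<bar> \<le> e"
  proof (intro exI[of _ d] conjI allI impI)
    fix u v assume uv: "\<bar>u - x\<bar> \<le> d \<and> \<bar>v - y\<bar> \<le> d"
    have "u * v - x * y = (u - x) * (v - y) + x * (v - y) + y * (u - x)" by (simp add: algebra_simps)
    moreover have tri: "\<bar>p + q + r\<bar> \<le> \<bar>p\<bar> + \<bar>q\<bar> + \<bar>r\<bar>" for p q r :: real by arith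
    ultimately have "\<bar>u * v - x * y\<bar> \<le> \<bar>(u - x) * (v - y)\<bar> + \<bar>x * (v - y)\<bar> + \<bar>y * (u - x)\<bar>"
      by metis
    then have "\<bar>u * v - x * y\<bar> \<le> \<bar>u - x\<bar> * \<bar>v - y\<bar> + \<bar>x\<bar> * \<bar>v - y\<bar> + \<bar>y\<bar> * \<bar>u - x\<bar>"
      by (simp add: abs_mult)
    also have "\<dots> \<le> d * d + \<bar>x\<bar> * d + \<bar>y\<bar> * d"
      using uv by (intro add_mono mult_mono) auto
    also have "\<dots> \<le> d * 1 + \<bar>x\<bar> * d + \<bar>y\<bar> * d"
      using d uv by (intro add_mono mult_left_mono) auto
    also have "\<dots> \<le> e" using d by (simp add: algebra_simps)
    finally show "\<bar>u * v - x * y\<bar> \<le> e" .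
  qed (use d in auto)
qed

lemma consistent_inverse:
  assumes "consistent M X x" "\<And>n. X n \<in> borel_measurable M" "x \<noteq> 0"
  shows "consistent M (\<lambda>n \<omega>. inverse (X n \<omega>)) (inverse x)"
  by (rule consistent_unop[OF assms(1,2)]) (use assms(3) in \<open>intro continuous_intros\<close>)

lemma consistent_divide:
  assumes "consistent M X x" "consistent M Y y" "\<And>n. X n \<in> borel_measurable M" "\<And>n. Y n \<in> borel_measurable M"
    "y \<noteq> 0"
  shows "consistent M (\<lambda>n \<omega>. X n \<omega> / Y n \<omega>) (x / y)"
proof -
  have [measurable]: "\<And>n. Y n \<in> borel_measurable M" by (rule assms(4))
  have "\<And>n. (\<lambda>\<omega>. inverse (Y n \<omega>)) \<in> borel_measurable M" by measurable
  from consistent_mult[OF assms(1) consistent_inverse[OF assms(2,4,5)] assms(3) this]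
  show ?thesis by (simp add: divide_inverse)
qed

lemma consistent_diff:
  assumes "consistent M X x" "consistent M Y y" "\<And>n. X n \<in> borel_measurable M" "\<And>n. Y n \<in> borel_measurable M"
  shows "consistent M (\<lambda>n \<omega>. X n \<omega> - Y n \<omega>) (x - y)"
proof -
  have "consistent M (\<lambda>n \<omega>. - Y n \<omega>) (- y)"
    by (rule consistent_unop[OF assms(2,4)]) (intro continuous_intros)
  from consistent_add[OF assms(1) this assms(3)] show ?thesis by (simp add: assms(4))
qed

lemma consistent_abs:
  assumes "consistent M X x" "\<And>n. X n \<in> borel_measurable M"
  shows "consistent M (\<lambda>n \<omega>. \<bar>X n \<omega>\<bar>) \<bar>x\<bar>"
  by (rule consistent_unop[OF assms]) (intro continuous_intros)

lemma consistent_sum: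
  assumes "finite K" "\<And>k. k \<in> K \<Longrightarrow> consistent M (X k) (x k)"
    "\<And>k n. k \<in> K \<Longrightarrow> X k n \<in> borel_measurable M"
  shows "consistent M (\<lambda>n \<omega>. \<Sum>k\<in>K. X k n \<omega>) (\<Sum>k\<in>K. x k)"
  using assms
proof (induction K rule: finite_induct)
  case empty then show ?case by (simp add: consistent_const)
next
  case (insert k K)
  have "consistent M (\<lambda>n \<omega>. X k n \<omega> + (\<Sum>k\<in>K. X k n \<omega>)) (x k + (\<Sum>k\<in>K. x k))"
    by (rule consistent_add) (use insert in auto)
  then show ?case using insert by simp
qed

lemma consistent_close:
  assumes "consistent M X x" "\<And>n \<omega>. \<omega> \<in> space M \<Longrightarrow> \<bar>Y n \<omega> - X n \<omega>\<bar> \<le> r n" "r \<longlonglongrightarrow> 0"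
    and [measurable]: "\<And>n. X n \<in> borel_measurable M"
  shows "consistent M Y x"
proof (rule consistent_squeeze)
  fix e :: real assume e: "e > 0"
  have ev: "eventually (\<lambda>n. r n < e/2) sequentially"
    using order_tendstoD(2)[OF assms(3), of "e/2"] e by simp
  show "eventually (\<lambda>n. measure M {\<omega>\<in>space M. e < \<bar>Y n \<omega> - x\<bar>} \<le> measure M {\<omega>\<in>space M. e/2 < \<bar>X n \<omega> - x\<bar>}) sequentially"
    using ev
  proof eventually_elim
    case (elim n)
    show ?case
    proof (rule measure_le_sub)
      show "{\<omega> \<in> space M. e / 2 < \<bar>X n \<omega> - x\<bar>} \<in> sets M" by measurable
      show "{\<omega> \<in> space M. e < \<bar>Y n \<omega> - x\<bar>} \<subseteq> {\<omega> \<in> space M. e / 2 < \<bar>X n \<omega> - x\<bar>}"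
      proof safe
        fix \<omega> assume "\<omega> \<in> space M" "e < \<bar>Y n \<omega> - x\<bar>"
        with assms(2)[of \<omega> n] elim show "e / 2 < \<bar>X n \<omega> - x\<bar>" by linarith
      qed
    qed
  qed
  show "(\<lambda>n. measure M {\<omega>\<in>space M. e/2 < \<bar>X n \<omega> - x\<bar>}) \<longlonglongrightarrow> 0"
    using assms(1)[unfolded consistent_def, rule_format, of "e/2"] e by simp
qed

lemma consistent_le:
  assumes "consistent M X x" "consistent M Y y" and [measurable]: "\<And>n. X n \<in> borel_measurable M" "\<And>n. Y n \<in> borel_measurable M"
    and le: "\<And>n \<omega>. \<omega> \<in> space M \<Longrightarrow> X n \<omega> \<le> Y n \<omega>"
  shows "x \<le> y"
proof (rule ccontr)
  assume "\<not> x \<le> y"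
  define e where "e = (x - y) / 3"
  have e: "e > 0" using \<open>\<not> x \<le> y\<close> by (simp add: e_def)
  define g where "g n = measure M {\<omega>\<in>space M. e < \<bar>X n \<omega> - x\<bar>} + measure M {\<omega>\<in>space M. e < \<bar>Y n \<omega> - y\<bar>}" for n
  have g1: "(\<lambda>n. measure M {\<omega>\<in>space M. e < \<bar>X n \<omega> - x\<bar>}) \<longlonglongrightarrow> 0"
    using assms(1)[unfolded consistent_def, rule_format, OF e] .
  have g2: "(\<lambda>n. measure M {\<omega>\<in>space M. e < \<bar>Y n \<omega> - y\<bar>}) \<longlonglongrightarrow> 0"
    using assms(2)[unfolded consistent_def, rule_format, OF e] .
  have g0: "g \<longlonglongrightarrow> 0" unfolding g_def using tendsto_add[OF g1 g2] by simp
  have g_ge: "1 \<le> g n" for n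
  proof -
    have s1: "{\<omega>\<in>space M. e < \<bar>X n \<omega> - x\<bar>} \<in> sets M" by measurable
    have s2: "{\<omega>\<in>space M. e < \<bar>Y n \<omega> - y\<bar>} \<in> sets M" by measurable
    have "space M \<subseteq> {\<omega>\<in>space M. e < \<bar>X n \<omega> - x\<bar>} \<union> {\<omega>\<in>space M. e < \<bar>Y n \<omega> - y\<bar>}"
    proof
      fix \<omega> assume w: "\<omega> \<in> space M"
      have "e < \<bar>X n \<omega> - x\<bar> \<or> e < \<bar>Y n \<omega> - y\<bar>"
      proof (rule ccontr)
        assume "\<not> (e < \<bar>X n \<omega> - x\<bar> \<or> e < \<bar>Y n \<omega> - y\<bar>)"
        then have "x - e \<le> X n \<omega>" "Y n \<omega> \<le> y + e" by (auto simp: abs_le_iff not_less)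
        moreover have "3 * e = x - y" unfolding e_def by simp
        ultimately show False using le[OF w, of n] \<open>\<not> x \<le> y\<close> by linarith
      qed
      then show "\<omega> \<in> {\<omega>\<in>space M. e < \<bar>X n \<omega> - x\<bar>} \<union> {\<omega>\<in>space M. e < \<bar>Y n \<omega> - y\<bar>}"
        using w by blast
    qed
    then have "measure M (space M) \<le> measure M ({\<omega>\<in>space M. e < \<bar>X n \<omega> - x\<bar>} \<union> {\<omega>\<in>space M. e < \<bar>Y n \<omega> - y\<bar>})"
      by (intro measure_le_sub) (use s1 s2 in auto)
    also have "\<dots> \<le> g n" unfolding g_def
      by (rule measure_subadditive[OF s1 s2]) (auto simp: emeasure_eq_measure)
    finally show ?thesis by (simp add: prob_space)
  qed
  have "1 \<le> (0::real)"
    by (rule LIMSEQ_le_const[OF g0]) (use g_ge in auto)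
  then show False by simp
qed

lemma consistent_bound:
  assumes "\<And>e. e > 0 \<Longrightarrow> \<exists>B b. consistent M B b \<and> b < e \<and> (\<forall>n. B n \<in> borel_measurable M) \<and>
       (\<forall>n. \<forall>\<omega>\<in>space M. \<bar>Z n \<omega> - z\<bar> \<le> B n \<omega>)"
  shows "consistent M Z z"
  unfolding consistent_def
proof (intro allI impI)
  fix e :: real assume e: "e > 0"
  obtain B b where B: "consistent M B b" "b < e/2" and [measurable]: "\<And>n. B n \<in> borel_measurable M"
    and B4:
    "\<And>n \<omega>. \<omega> \<in> space M \<Longrightarrow> \<bar>Z n \<omega> - z\<bar> \<le> B n \<omega>"
    using assms[of "e/2"] e by auto
  show "(\<lambda>n. measure M {\<omega>\<in>space M. e < \<bar>Z n \<omega> - z\<bar>}) \<longlonglongrightarrow> 0"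
  proof (rule real_tendsto_sandwich[of "\<lambda>_. 0" _ _ "\<lambda>n. measure M {\<omega>\<in>space M. e/2 < \<bar>B n \<omega> - b\<bar>}"])
    show "\<forall>\<^sub>F n in sequentially. measure M {\<omega>\<in>space M. e < \<bar>Z n \<omega> - z\<bar>} \<le> measure M {\<omega>\<in>space M. e/2 < \<bar>B n \<omega> - b\<bar>}"
    proof (intro always_eventually allI measure_le_sub)
      fix n
      show "{\<omega> \<in> space M. e / 2 < \<bar>B n \<omega> - b\<bar>} \<in> sets M" by measurable
      show "{\<omega> \<in> space M. e < \<bar>Z n \<omega> - z\<bar>} \<subseteq> {\<omega> \<in> space M. e / 2 < \<bar>B n \<omega> - b\<bar>}"
      proof safe
        fix \<omega> assume "\<omega> \<in> space M" "e < \<bar>Z n \<omega> - z\<bar>"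
        with B4[of \<omega> n] B(2) show "e / 2 < \<bar>B n \<omega> - b\<bar>" by linarith
      qed
    qed
    show "(\<lambda>n. measure M {\<omega>\<in>space M. e/2 < \<bar>B n \<omega> - b\<bar>}) \<longlonglongrightarrow> 0"
      using B(1)[unfolded consistent_def, rule_format, of "e/2"] e by simp
  qed auto
qed

end

lemma card_sum: fixes n :: nat shows "real (card {i. i < n \<and> P i}) = (\<Sum>i<n. if P i then 1 else 0)"
  by (simp add: sum.If_cases Int_def conj_commute)

lemma first_rep:
  fixes f :: "nat \<Rightarrow> 'b" and n :: nat and P :: "nat \<Rightarrow> bool"
  defines "R \<equiv> {i. i < n \<and> P i \<and> (\<forall>i'\<in>{..<i}. P i' \<longrightarrow> f i' \<noteq> f i)}"
  shows "inj_on f R" "f ` R = f ` {i. i < n \<and> P i}"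
proof -
  show "inj_on f R"
  proof (rule inj_onI)
    fix i j assume ij: "i \<in> R" "j \<in> R" "f i = f j"
    show "i = j"
    proof (rule ccontr)
      assume "i \<noteq> j"
      then have "i < j \<or> j < i" by arith
      then show False using ij unfolding R_def by auto
    qed
  qed
  show "f ` R = f ` {i. i < n \<and> P i}"
  proof
    show "f ` R \<subseteq> f ` {i. i < n \<and> P i}" unfolding R_def by auto
    show "f ` {i. i < n \<and> P i} \<subseteq> f ` R"
    proof
      fix y assume "y \<in> f ` {i. i < n \<and> P i}"
      then obtain i where i: "i < n" "P i" "y = f i" by auto
      define m where "m = (LEAST m. P m \<and> f m = f i)"
      have m: "P m \<and> f m = f i" unfolding m_def by (rule LeastI[of _ i]) (use i in auto)
      have mi: "m \<le> i" unfolding m_def by (rule Least_le) (use i in auto)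
      have "\<forall>i'\<in>{..<m}. P i' \<longrightarrow> f i' \<noteq> f m"
      proof (intro ballI impI notI)
        fix i' assume i': "i' \<in> {..<m}" "P i'" "f i' = f m"
        then have "P i' \<and> f i' = f i" using m by auto
        then have "m \<le> i'" unfolding m_def by (rule Least_le[where P="\<lambda>m. P m \<and> f m = f i"])
        with i'(1) show False by simp
      qed
      then have "m \<in> R" unfolding R_def using mi i m by auto
      then show "y \<in> f ` R" using m i by (auto intro!: image_eqI[of _ f m])
    qed
  qed
qed

lemma sum_image_first:
  fixes f :: "nat \<Rightarrow> 'b" and G :: "'b \<Rightarrow> real"
  shows "(\<Sum>s\<in>f ` {i. i < n \<and> P i}. G s) =
    (\<Sum>i<n. if P i \<and> (\<forall>i'\<in>{..<i}. P i' \<longrightarrow> f i' \<noteq> f i) then G (f i) else 0)"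
proof -
  let ?R = "{i. i < n \<and> P i \<and> (\<forall>i'\<in>{..<i}. P i' \<longrightarrow> f i' \<noteq> f i)}"
  have "(\<Sum>s\<in>f ` {i. i < n \<and> P i}. G s) = (\<Sum>s\<in>f ` ?R. G s)" using first_rep(2)[of f n P] by simp
  also have "\<dots> = (\<Sum>i\<in>?R. G (f i))" by (rule sum.reindex_cong[OF first_rep(1)]) auto
  also have "\<dots> = (\<Sum>i<n. if P i \<and> (\<forall>i'\<in>{..<i}. P i' \<longrightarrow> f i' \<noteq> f i) then G (f i) else 0)"
  proof -
    have "?R = {..<n} \<inter> {i. P i \<and> (\<forall>i'\<in>{..<i}. P i' \<longrightarrow> f i' \<noteq> f i)}" by auto
    then show ?thesis by (simp add: sum.inter_restrict)
  qed
  finally show ?thesis .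
qed

lemma prod_image_first:
  fixes f :: "nat \<Rightarrow> 'b" and G :: "'b \<Rightarrow> real"
  shows "(\<Prod>s\<in>f ` {i. i < n \<and> P i}. G s) =
    (\<Prod>i<n. if P i \<and> (\<forall>i'\<in>{..<i}. P i' \<longrightarrow> f i' \<noteq> f i) then G (f i) else 1)"
proof -
  let ?R = "{i. i < n \<and> P i \<and> (\<forall>i'\<in>{..<i}. P i' \<longrightarrow> f i' \<noteq> f i)}"
  have "(\<Prod>s\<in>f ` {i. i < n \<and> P i}. G s) = (\<Prod>s\<in>f ` ?R. G s)" using first_rep(2)[of f n P] by simp
  also have "\<dots> = (\<Prod>i\<in>?R. G (f i))" by (rule prod.reindex_cong[OF first_rep(1)]) auto
  also have "\<dots> = (\<Prod>i<n. if P i \<and> (\<forall>i'\<in>{..<i}. P i' \<longrightarrow> f i' \<noteq> f i) then G (f i) else 1)"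
  proof -
    have "?R = {..<n} \<inter> {i. P i \<and> (\<forall>i'\<in>{..<i}. P i' \<longrightarrow> f i' \<noteq> f i)}" by auto
    then show ?thesis by (simp add: prod.inter_restrict)
  qed
  finally show ?thesis .
qed

lemma Jall_le_img: "Jall xs n d \<inter> {..t} = (\<lambda>i. fst (xs i)) ` {i. i < n \<and> (0 < fst (xs i) \<and> snd (xs i) \<in> {1..d} \<and> fst (xs i) \<le> t)}"
  unfolding Jall_def by auto
lemma Jall_less_img: "Jall xs n d \<inter> {..<t} = (\<lambda>i. fst (xs i)) ` {i. i < n \<and> (0 < fst (xs i) \<and> snd (xs i) \<in> {1..d} \<and> fst (xs i) < t)}"
  unfolding Jall_def by auto

lemma hz_sum: "hz xs n k s = (\<Sum>m<n. if fst (xs m) = s \<and> snd (xs m) = k then 1 else 0) / (\<Sum>m<n. if s \<le> fst (xs m) then 1 else 0)"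
  unfolding hz_def cnt_def Yc_def card_sum by simp

locale AJset = prob_space M for M :: "'a measure" +
  fixes d :: nat and T Tt :: "'a \<Rightarrow> real" and D Dt :: "'a \<Rightarrow> nat" and X :: "nat \<Rightarrow> 'a \<Rightarrow> real \<times> nat"
  assumes d1: "d \<ge> 1"
    and T_meas[measurable]: "T \<in> borel_measurable M" and T_pos: "\<forall>\<omega>\<in>space M. T \<omega> > 0"
    and D_meas[measurable]: "D \<in> measurable M (count_space UNIV)" and D_range: "\<forall>\<omega>\<in>space M. D \<omega> \<in> {1..d}"
    and Tt_meas[measurable]: "Tt \<in> borel_measurable M" and Tt_pos: "\<forall>\<omega>\<in>space M. 0 < Tt \<omega> \<and> Tt \<omega> \<le> T \<omega>"
    and Dt_def: "\<forall>\<omega>. Dt \<omega> = (if Tt \<omega> = T \<omega> then D \<omega> else 0)"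
    and indep: "indep_vars (\<lambda>_. borel \<Otimes>\<^sub>M count_space UNIV) X UNIV"
    and distrX: "\<forall>i. distr M (borel \<Otimes>\<^sub>M count_space UNIV) (X i)
             = distr M (borel \<Otimes>\<^sub>M count_space UNIV) (\<lambda>\<omega>. (Tt \<omega>, Dt \<omega>))"
begin

lemma X_meas[measurable]: "X i \<in> measurable M (borel \<Otimes>\<^sub>M count_space UNIV)"
  using indep unfolding indep_vars_def2 by auto

lemma Dt_eq: "Dt = (\<lambda>\<omega>. if Tt \<omega> = T \<omega> then D \<omega> else 0)"
  using Dt_def by auto

lemma Dt_meas[measurable]: "Dt \<in> measurable M (count_space UNIV)"
proof -
  have [measurable]: "{w \<in> space M. Tt w = T w} \<in> sets M" by (rule borel_measurable_eq) measurable
  show ?thesis unfolding Dt_eq by measurable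
qed

lemma TD_meas[measurable]: "(\<lambda>\<omega>. (Tt \<omega>, Dt \<omega>)) \<in> measurable M (borel \<Otimes>\<^sub>M count_space UNIV)"
  by measurable

lemma wlln:
  assumes g[measurable]: "g \<in> borel_measurable (borel \<Otimes>\<^sub>M count_space UNIV)" and g01: "\<And>z. g z \<in> {0..1}"
  shows "consistent M (\<lambda>n \<omega>. (\<Sum>i<n. g (X i \<omega>)) / real n) (expectation (\<lambda>\<omega>. g (Tt \<omega>, Dt \<omega>)))"
proof (rule consistent_squeeze)
  fix e :: real assume e: "e > 0"
  let ?mu = "expectation (\<lambda>\<omega>. g (Tt \<omega>, Dt \<omega>))"
  show "eventually (\<lambda>n. measure M {\<omega>\<in>space M. e < \<bar>(\<Sum>i<n. g (X i \<omega>)) / real n - ?mu\<bar>}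
      \<le> 2 * exp (- 2 * real n * e\<^sup>2 / (1 - 0)\<^sup>2)) sequentially"
    using eventually_ge_at_top[of 1]
  proof eventually_elim
    case (elim n)
    have H: "Hoeffding_ineq_iid M {..<n} (\<lambda>i \<omega>. g (X i \<omega>)) (\<lambda>\<omega>. g (Tt \<omega>, Dt \<omega>)) 0 1"
      unfolding Hoeffding_ineq_iid_def iid_interval_bounded_random_variables_def
        iid_interval_bounded_random_variables_axioms_def
    proof (intro conjI)
      show "prob_space M" by (rule prob_space_axioms)
      show "finite {..<n}" by simp
      have "indep_vars (\<lambda>_. borel) (\<lambda>i \<omega>. g (X i \<omega>)) UNIV"
        by (rule indep_vars_compose2[OF indep]) measurable
      then show "indep_vars (\<lambda>_. borel) (\<lambda>i \<omega>. g (X i \<omega>)) {..<n}"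
        by (rule indep_vars_subset) auto
      show "\<forall>i. i \<in> {..<n} \<longrightarrow> distr M borel (\<lambda>\<omega>. g (X i \<omega>)) = distr M borel (\<lambda>\<omega>. g (Tt \<omega>, Dt \<omega>))"
      proof (intro allI impI)
        fix i
        have "distr M borel (\<lambda>\<omega>. g (X i \<omega>)) = distr (distr M (borel \<Otimes>\<^sub>M count_space UNIV) (X i)) borel g"
          by (subst distr_distr) (auto simp: comp_def)
        also have "\<dots> = distr (distr M (borel \<Otimes>\<^sub>M count_space UNIV) (\<lambda>\<omega>. (Tt \<omega>, Dt \<omega>))) borel g"
          using distrX by simp
        also have "\<dots> = distr M borel (\<lambda>\<omega>. g (Tt \<omega>, Dt \<omega>))"
          by (subst distr_distr) (auto simp: comp_def)
        finally show "distr M borel (\<lambda>\<omega>. g (X i \<omega>)) = distr M borel (\<lambda>\<omega>. g (Tt \<omega>, Dt \<omega>))" .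
      qed
      show "random_variable borel (\<lambda>\<omega>. g (Tt \<omega>, Dt \<omega>))" by measurable
      show "AE x in M. g (Tt x, Dt x) \<in> {0..1}" using g01 by simp
    qed
    have "measure M {\<omega>\<in>space M. e < \<bar>(\<Sum>i<n. g (X i \<omega>)) / real n - ?mu\<bar>} \<le>
        measure M {\<omega>\<in>space M. e \<le> \<bar>(\<Sum>i\<in>{..<n}. g (X i \<omega>)) / real (card {..<n}) - ?mu\<bar>}"
      by (intro measure_le_sub) (auto, measurable)
    also have "\<dots> \<le> 2 * exp (- 2 * real (card {..<n}) * e\<^sup>2 / (1 - 0)\<^sup>2)"
    proof -
      have ne: "{..<n} \<noteq> {}" using elim by (auto simp: lessThan_empty_iff)
      show ?thesis using Hoeffding_ineq_iid.Hoeffding_ineq_abs_ge'[OF H, of e] e ne by simp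
    qed
    finally show ?case by simp
  qed
  show "(\<lambda>n. 2 * exp (- 2 * real n * e\<^sup>2 / (1 - 0)\<^sup>2)) \<longlonglongrightarrow> 0"
  proof -
    have "(\<lambda>n. exp (- (2 * e\<^sup>2) * real n)) \<longlonglongrightarrow> 0"
      using e by (intro filterlim_compose[OF exp_at_bot] filterlim_tendsto_neg_mult_at_bot[OF tendsto_const] filterlim_real_sequentially) auto
    from tendsto_mult[OF tendsto_const[of 2] this] show ?thesis by (simp add: mult_ac)
  qed
qed


lemma snd_meas[measurable]: "(\<lambda>\<omega>. snd (X i \<omega>)) \<in> measurable M (count_space UNIV)" by measurable
lemma pred_snd[measurable]: "Measurable.pred M (\<lambda>\<omega>. snd (X i \<omega>) \<in> S)"
proof -
  have "(\<lambda>\<omega>. snd (X i \<omega>)) -` S \<inter> space M \<in> sets M" by (rule measurable_sets[OF snd_meas]) simp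
  moreover have "{\<omega>\<in>space M. snd (X i \<omega>) \<in> S} = (\<lambda>\<omega>. snd (X i \<omega>)) -` S \<inter> space M" by auto
  ultimately show ?thesis unfolding pred_def by simp
qed

lemma hz_meas[measurable]: "(\<lambda>\<omega>. hz (\<lambda>m. X m \<omega>) n k (fst (X i \<omega>))) \<in> borel_measurable M"
  unfolding hz_sum by measurable
lemma hzt_meas[measurable]: "(\<lambda>\<omega>. hzt (\<lambda>m. X m \<omega>) n d (fst (X i \<omega>))) \<in> borel_measurable M"
  unfolding hzt_def by measurable

lemma Prd_less_meas[measurable]: "(\<lambda>\<omega>. Prd (\<lambda>m. X m \<omega>) n d (Jall (\<lambda>m. X m \<omega>) n d \<inter> {..<fst (X i \<omega>)})) \<in> borel_measurable M"
  unfolding Prd_def Jall_less_img prod_image_first by measurable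

lemma Fh_meas[measurable]: "(\<lambda>\<omega>. Fh (\<lambda>m. X m \<omega>) n d k t) \<in> borel_measurable M"
  unfolding Fh_def Jall_le_img sum_image_first by measurable

lemma Sh_meas[measurable]: "(\<lambda>\<omega>. Sh (\<lambda>m. X m \<omega>) n d t) \<in> borel_measurable M"
proof -
  have "Sh (\<lambda>m. X m \<omega>) n d t = 1 - (\<Sum>k\<in>{1..d}. Fh (\<lambda>m. X m \<omega>) n d k t)" for \<omega>
    using row_sum[of "\<lambda>m. X m \<omega>" n d t] by simp
  then show ?thesis by simp
qed

lemma AJ_meas[measurable]:
  assumes "i < d+1" "k < d+1"
  shows "(\<lambda>\<omega>. AJ (\<lambda>m. X m \<omega>) n d t $$ (i,k)) \<in> borel_measurable M"
proof -
  have "AJ (\<lambda>m. X m \<omega>) n d t $$ (i,k) =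
    (if i = 0 then (if k = 0 then Sh (\<lambda>m. X m \<omega>) n d t else Fh (\<lambda>m. X m \<omega>) n d k t)
      else (if i = k then 1 else 0))" for \<omega>
    using assms by (simp add: AJ_eq shapeMat_def)
  then show ?thesis by simp
qed


lemma sets_pairC:
  assumes "Measurable.pred (borel \<Otimes>\<^sub>M count_space UNIV) P"
  shows "{z. P z} \<in> sets (borel \<Otimes>\<^sub>M count_space UNIV)"
  using assms unfolding pred_def by (simp add: space_pair_measure)

lemma pred_snd_pair[measurable]: "Measurable.pred (borel \<Otimes>\<^sub>M count_space UNIV) (\<lambda>z::real \<times> nat. snd z = k)"
proof -
  have "(\<lambda>z::real \<times> nat. snd z) -` {k} \<inter> space (borel \<Otimes>\<^sub>M count_space UNIV) \<in> sets (borel \<Otimes>\<^sub>M count_space UNIV)"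
    by (rule measurable_sets[OF measurable_snd]) simp
  moreover have "{z \<in> space (borel \<Otimes>\<^sub>M count_space UNIV). snd z = k} = (\<lambda>z::real \<times> nat. snd z) -` {k} \<inter> space (borel \<Otimes>\<^sub>M count_space UNIV)" by auto
  ultimately show ?thesis unfolding pred_def by simp
qed

lemma wlln_set:
  assumes S: "S \<in> sets (borel \<Otimes>\<^sub>M count_space UNIV)"
  shows "consistent M (\<lambda>n \<omega>. real (card {i. i < n \<and> X i \<omega> \<in> S}) / real n) (measure M {\<omega>\<in>space M. (Tt \<omega>, Dt \<omega>) \<in> S})"
proof -
  have g: "indicator S \<in> borel_measurable (borel \<Otimes>\<^sub>M count_space UNIV)"
    using S by (rule borel_measurable_indicator)
  have "consistent M (\<lambda>n \<omega>. (\<Sum>i<n. indicator S (X i \<omega>)) / real n) (expectation (\<lambda>\<omega>. indicator S (Tt \<omega>, Dt \<omega>)))"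
    by (rule wlln[OF g]) (auto simp: indicator_def)
  moreover have "(\<Sum>i<n. indicator S (X i \<omega>)) = real (card {i. i < n \<and> X i \<omega> \<in> S})" for n \<omega>
  proof -
    have "(\<Sum>i<n. indicator S (X i \<omega>) :: real) = (\<Sum>i<n. if X i \<omega> \<in> S then 1 else 0)"
      by (intro sum.cong) (auto simp: indicator_def)
    also have "\<dots> = real (card {i. i < n \<and> X i \<omega> \<in> S})" by (rule card_sum[symmetric])
    finally show ?thesis .
  qed
  moreover have "expectation (\<lambda>\<omega>. indicator S (Tt \<omega>, Dt \<omega>)) = measure M {\<omega>\<in>space M. (Tt \<omega>, Dt \<omega>) \<in> S}"
  proof -
    have "(\<lambda>\<omega>. indicator S (Tt \<omega>, Dt \<omega>) :: real) = indicator ((\<lambda>\<omega>. (Tt \<omega>, Dt \<omega>)) -` S)"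
      by (auto simp: indicator_def)
    then show ?thesis by (simp add: integral_indicator Int_def conj_commute vimage_def)
  qed
  ultimately show ?thesis by simp
qed

definition "pN k a b = measure M {\<omega>\<in>space M. a < Tt \<omega> \<and> Tt \<omega> < b \<and> Dt \<omega> = k}"
definition "pP a = measure M {\<omega>\<in>space M. a < Tt \<omega>}"
definition "pY b = measure M {\<omega>\<in>space M. b \<le> Tt \<omega>}"
definition "pA k b = measure M {\<omega>\<in>space M. Tt \<omega> = b \<and> Dt \<omega> = k}"

lemma cons_Nop: "consistent M (\<lambda>n \<omega>. real (Nop (\<lambda>m. X m \<omega>) n k a b) / real n) (pN k a b)"
  using wlln_set[of "{z. a < fst z \<and> fst z < b \<and> snd z = k}"]
  unfolding Nop_def pN_def by (simp add: sets_pairC)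
lemma cons_Yp: "consistent M (\<lambda>n \<omega>. real (Yp (\<lambda>m. X m \<omega>) n a) / real n) (pP a)"
  using wlln_set[of "{z. a < fst z}"]
  unfolding Yp_def pP_def by (simp add: sets_pairC)
lemma cons_Yc: "consistent M (\<lambda>n \<omega>. real (Yc (\<lambda>m. X m \<omega>) n b) / real n) (pY b)"
  using wlln_set[of "{z. b \<le> fst z}"]
  unfolding Yc_def pY_def by (simp add: sets_pairC)
lemma cons_cnt: "consistent M (\<lambda>n \<omega>. real (cnt (\<lambda>m. X m \<omega>) n k b) / real n) (pA k b)"
  using wlln_set[of "{z. fst z = b \<and> snd z = k}"]
  unfolding cnt_def pA_def by (simp add: sets_pairC)

lemma Nop_meas[measurable]: "(\<lambda>\<omega>. real (Nop (\<lambda>m. X m \<omega>) n k a b)) \<in> borel_measurable M"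
  unfolding Nop_def card_sum by measurable
lemma Yp_meas[measurable]: "(\<lambda>\<omega>. real (Yp (\<lambda>m. X m \<omega>) n a)) \<in> borel_measurable M"
  unfolding Yp_def card_sum by measurable
lemma Yc_meas[measurable]: "(\<lambda>\<omega>. real (Yc (\<lambda>m. X m \<omega>) n b)) \<in> borel_measurable M"
  unfolding Yc_def card_sum by measurable
lemma cnt_meas[measurable]: "(\<lambda>\<omega>. real (cnt (\<lambda>m. X m \<omega>) n k b)) \<in> borel_measurable M"
  unfolding cnt_def card_sum by measurable

lemma cons_maxYc: "consistent M (\<lambda>n \<omega>. max 1 (real (Yc (\<lambda>m. X m \<omega>) n b)) / real n) (pY b)"
proof (rule consistent_close[OF cons_Yc])
  show "(\<lambda>n. 1 / real n) \<longlonglongrightarrow> 0" by (rule lim_const_over_n)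
  fix n \<omega>
  show "\<bar>max 1 (real (Yc (\<lambda>m. X m \<omega>) n b)) / real n - real (Yc (\<lambda>m. X m \<omega>) n b) / real n\<bar> \<le> 1 / real n"
  proof (cases "n = 0")
    case False
    have "\<bar>max 1 (real (Yc (\<lambda>m. X m \<omega>) n b)) - real (Yc (\<lambda>m. X m \<omega>) n b)\<bar> \<le> 1" by simp
    then show ?thesis using False by (simp add: diff_divide_distrib[symmetric] divide_right_mono)
  qed simp
qed measurable

lemma ratio_n:
  fixes A B :: "nat \<Rightarrow> nat"
  assumes "\<And>n. n = 0 \<Longrightarrow> A n = 0"
  shows "real (A n) / c = (real (A n) / real n) / (c / real n)"
  using assms by (cases "n = 0") auto

end

lemma grid_exists:
  fixes \<Phi> :: "real \<Rightarrow> real" and B \<epsilon> t :: real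
  assumes mono: "\<And>x y. x \<le> y \<Longrightarrow> \<Phi> x \<le> \<Phi> y" and rc: "\<And>x. continuous (at_right x) \<Phi>"
    and bnd: "\<And>x. \<Phi> x \<le> B" and e: "\<epsilon> > 0" and t: "0 \<le> t"
  shows "\<exists>K g. g 0 = 0 \<and> g K = t \<and> (\<forall>i<K. g i \<le> g (Suc i)) \<and>
     (\<forall>i<K. \<forall>x. g i < x \<and> x < g (Suc i) \<longrightarrow> \<Phi> x - \<Phi> (g i) \<le> \<epsilon>)"
proof -
  obtain K0 :: nat where K0: "B - \<Phi> 0 \<le> real K0 * \<epsilon>"
  proof -
    obtain n :: nat where "(B - \<Phi> 0) / \<epsilon> \<le> real n" using real_arch_simple by blast
    then have "B - \<Phi> 0 \<le> real n * \<epsilon>" using e by (simp add: field_simps)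
    then show ?thesis using that by blast
  qed
  define K where "K = Suc K0"
  define lev where "lev k = \<Phi> 0 + real k * \<epsilon>" for k :: nat
  define S where "S k = {x. 0 \<le> x \<and> x \<le> t \<and> lev k \<le> \<Phi> x}" for k
  define q where "q k = (if S k = {} then t else Inf (S k))" for k
  define g where "g i = (if i = 0 then 0 else if i < K then q i else t)" for i
  have bdd: "bdd_below (S k)" for k unfolding S_def by (rule bdd_belowI[of _ 0]) auto
  have q_range: "0 \<le> q k \<and> q k \<le> t" for k
  proof (cases "S k = {}")
    case True then show ?thesis using t by (simp add: q_def)
  next
    case False
    then obtain x where x: "x \<in> S k" by auto
    have "0 \<le> Inf (S k)" using False by (intro cInf_greatest) (auto simp: S_def)
    moreover have "Inf (S k) \<le> x" by (rule cInf_lower[OF x bdd])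
    ultimately show ?thesis using False x by (auto simp: q_def S_def)
  qed
  have q_lev: "lev k \<le> \<Phi> (q k)" if ne: "S k \<noteq> {}" for k
  proof (rule ccontr)
    assume "\<not> lev k \<le> \<Phi> (q k)"
    then have lt: "\<Phi> (q k) < lev k" by simp
    have "(\<Phi> \<longlongrightarrow> \<Phi> (q k)) (at_right (q k))" using rc[of "q k"] by (simp add: continuous_within)
    then have "eventually (\<lambda>y. \<Phi> y < lev k) (at_right (q k))" using lt by (rule order_tendstoD(2))
    then obtain b where b: "b > q k" "\<And>y. y > q k \<Longrightarrow> y < b \<Longrightarrow> \<Phi> y < lev k"
      unfolding eventually_at_right[of "q k" "q k + 1", simplified] by blast
    have "Inf (S k) < b" using b(1) ne by (simp add: q_def)
    then obtain s where s: "s \<in> S k" "s < b" using cInf_less_iff[OF ne bdd] by blast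
    have "q k \<le> s" using cInf_lower[OF s(1) bdd] ne by (simp add: q_def)
    show False
    proof (cases "s = q k")
      case True then show ?thesis using s(1) lt by (simp add: S_def)
    next
      case False
      then have "\<Phi> s < lev k" using b(2)[of s] s(2) \<open>q k \<le> s\<close> by simp
      then show ?thesis using s(1) by (simp add: S_def)
    qed
  qed
  have q_below: "\<Phi> x < lev k" if "0 \<le> x" "x \<le> t" "x < q k" for x k
  proof (cases "S k = {}")
    case True then show ?thesis using that by (auto simp: S_def)
  next
    case False
    have "x \<notin> S k"
    proof
      assume "x \<in> S k"
      then have "Inf (S k) \<le> x" by (rule cInf_lower[OF _ bdd])
      then show False using that(3) False by (simp add: q_def)
    qed
    then show ?thesis using that by (auto simp: S_def)
  qed
  have q_mono: "q k \<le> q k'" if "k \<le> k'" for k k'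
  proof (cases "S k' = {}")
    case True then show ?thesis using q_range[of k] by (simp add: q_def)
  next
    case False
    have sub: "S k' \<subseteq> S k" unfolding S_def lev_def using that e
      by (auto intro: order_trans[rotated] simp: mult_right_mono)
    then have ne: "S k \<noteq> {}" using False by auto
    have "Inf (S k) \<le> Inf (S k')"
      by (rule cInf_greatest[OF False]) (use sub bdd in \<open>auto intro: cInf_lower\<close>)
    then show ?thesis using False ne by (simp add: q_def)
  qed
  have g0: "g 0 = 0" by (simp add: g_def)
  have gK: "g K = t" by (simp add: g_def K_def)
  have grange: "0 \<le> g i \<and> g i \<le> t" for i using q_range[of i] t by (simp add: g_def)
  have gmono: "\<forall>i<K. g i \<le> g (Suc i)"
  proof (intro allI impI)
    fix i assume i: "i < K"
    show "g i \<le> g (Suc i)"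
    proof (cases "i = 0")
      case True then show ?thesis using grange[of "Suc i"] by (simp add: g_def)
    next
      case False
      then show ?thesis using q_mono[of i "Suc i"] q_range[of i] i by (auto simp: g_def)
    qed
  qed
  have gcell: "\<forall>i<K. \<forall>x. g i < x \<and> x < g (Suc i) \<longrightarrow> \<Phi> x - \<Phi> (g i) \<le> \<epsilon>"
  proof (intro allI impI)
    fix i x assume i: "i < K" and x: "g i < x \<and> x < g (Suc i)"
    have x0: "0 \<le> x" "x \<le> t" using x grange[of i] grange[of "Suc i"] by auto
    have low: "lev i \<le> \<Phi> (g i)"
    proof (cases "i = 0")
      case True then show ?thesis by (simp add: g_def lev_def)
    next
      case False
      have "S i \<noteq> {}"
      proof
        assume "S i = {}"
        then have "g i = t" using False i by (simp add: g_def q_def)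
        then show False using x x0 by simp
      qed
      then show ?thesis using q_lev[of i] False i by (simp add: g_def)
    qed
    show "\<Phi> x - \<Phi> (g i) \<le> \<epsilon>"
    proof (cases "Suc i < K")
      case True
      then have "x < q (Suc i)" using x by (simp add: g_def)
      then have "\<Phi> x < lev (Suc i)" using q_below x0 by blast
      then show ?thesis using low by (simp add: lev_def algebra_simps)
    next
      case False
      then have "i = K0" using i by (simp add: K_def)
      then have "\<Phi> x \<le> lev i" using bnd[of x] K0 by (simp add: lev_def)
      then show ?thesis using low e by simp
    qed
  qed
  show ?thesis using g0 gK gmono gcell by blast
qed

context prob_space
begin

lemma left_lim_surv:
  assumes Z[measurable]: "Z \<in> borel_measurable M"
  shows "left_lim (surv M Z) s = measure M {\<omega>\<in>space M. s \<le> Z \<omega>}"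
proof -
  let ?mu = "distr M borel Z"
  have fb: "finite_borel_measure ?mu"
    using real_distribution_distr[OF Z] by (simp add: real_distribution.finite_borel_measure_M)
  have cdf: "cdf ?mu x = measure M {\<omega>\<in>space M. Z \<omega> \<le> x}" for x
    unfolding cdf_def by (subst measure_distr) (auto intro!: arg_cong[where f="measure M"])
  have sv: "surv M Z x = 1 - cdf ?mu x" for x
  proof -
    have "{\<omega>\<in>space M. x < Z \<omega>} = space M - {\<omega>\<in>space M. Z \<omega> \<le> x}" by auto
    then show ?thesis unfolding surv_def cdf by (simp add: prob_compl)
  qed
  have lt: "measure ?mu {..<s} = measure M {\<omega>\<in>space M. Z \<omega> < s}"
    by (subst measure_distr) (auto intro!: arg_cong[where f="measure M"])
  have "(surv M Z \<longlongrightarrow> 1 - measure ?mu {..<s}) (at_left s)"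
    unfolding sv[abs_def] by (intro tendsto_diff tendsto_const finite_borel_measure.cdf_at_left[OF fb])
  then have "left_lim (surv M Z) s = 1 - measure ?mu {..<s}"
    unfolding left_lim_def by (rule tendsto_Lim[OF trivial_limit_at_left_real])
  also have "\<dots> = measure M {\<omega>\<in>space M. s \<le> Z \<omega>}"
  proof -
    have "{\<omega>\<in>space M. s \<le> Z \<omega>} = space M - {\<omega>\<in>space M. Z \<omega> < s}" by auto
    then show ?thesis unfolding lt by (simp add: prob_compl)
  qed
  finally show ?thesis .
qed

definition NU :: "('a \<Rightarrow> real) \<Rightarrow> ('a \<Rightarrow> nat) \<Rightarrow> nat \<Rightarrow> real measure" where
  "NU Z Y k = distr (restrict_space M {\<omega>\<in>space M. Y \<omega> = k}) borel Z"

lemma NU_measure: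
  assumes Z[measurable]: "Z \<in> borel_measurable M" and Y[measurable]: "Y \<in> measurable M (count_space UNIV)"
    and A: "A \<in> sets borel"
  shows "measure (NU Z Y k) A = measure M {\<omega>\<in>space M. Z \<omega> \<in> A \<and> Y \<omega> = k}"
proof -
  have Ysets: "{\<omega>\<in>space M. Y \<omega> = k} \<in> sets M" by measurable
  have Zr: "Z \<in> restrict_space M {\<omega>\<in>space M. Y \<omega> = k} \<rightarrow>\<^sub>M borel"
    by (rule measurable_restrict_space1) measurable
  have "emeasure (NU Z Y k) A = emeasure (restrict_space M {\<omega>\<in>space M. Y \<omega> = k})
      (Z -` A \<inter> space (restrict_space M {\<omega>\<in>space M. Y \<omega> = k}))"
    unfolding NU_def by (rule emeasure_distr[OF Zr A])
  also have "\<dots> = emeasure M (Z -` A \<inter> space (restrict_space M {\<omega>\<in>space M. Y \<omega> = k}))"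
    by (rule emeasure_restrict_space) (use Ysets in \<open>auto simp: space_restrict_space\<close>)
  also have "Z -` A \<inter> space (restrict_space M {\<omega>\<in>space M. Y \<omega> = k}) = {\<omega>\<in>space M. Z \<omega> \<in> A \<and> Y \<omega> = k}"
    by (auto simp: space_restrict_space)
  finally show ?thesis by (simp add: measure_def)
qed

lemma NU_fbm:
  assumes Z[measurable]: "Z \<in> borel_measurable M" and Y[measurable]: "Y \<in> measurable M (count_space UNIV)"
  shows "finite_borel_measure (NU Z Y k)"
proof -
  have Ysets: "{\<omega>\<in>space M. Y \<omega> = k} \<in> sets M" by measurable
  have Zr: "Z \<in> restrict_space M {\<omega>\<in>space M. Y \<omega> = k} \<rightarrow>\<^sub>M borel"
    by (rule measurable_restrict_space1) measurable
  have "finite_measure (restrict_space M {\<omega>\<in>space M. Y \<omega> = k})"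
    by (rule finite_measure_restrict_space) (use Ysets finite_measure_axioms in auto)
  then have "finite_measure (NU Z Y k)" unfolding NU_def by (rule finite_measure.finite_measure_distr[OF _ Zr])
  then show ?thesis unfolding finite_borel_measure_def finite_borel_measure_axioms_def NU_def by simp
qed

lemma NU_interval:
  assumes Z[measurable]: "Z \<in> borel_measurable M" and Y[measurable]: "Y \<in> measurable M (count_space UNIV)"
  shows "interval_measure (subdist M Z Y k) = NU Z Y k"
proof -
  interpret fb: finite_borel_measure "NU Z Y k" by (rule NU_fbm[OF Z Y])
  have c: "cdf (NU Z Y k) = subdist M Z Y k"
    unfolding cdf_def subdist_def by (rule ext) (subst NU_measure[OF Z Y], auto)
  have fb2: "finite_borel_measure (interval_measure (cdf (NU Z Y k)))"
    by (rule finite_borel_measure_interval_measure[OF fb.cdf_nondecreasing fb.cdf_is_right_cont fb.cdf_lim_at_bot fb.cdf_lim_at_top]) auto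
  have "cdf (interval_measure (cdf (NU Z Y k))) = cdf (NU Z Y k)"
    by (rule cdf_interval_measure[OF fb.cdf_nondecreasing fb.cdf_is_right_cont fb.cdf_lim_at_bot])
  then have "interval_measure (cdf (NU Z Y k)) = NU Z Y k"
    by (rule cdf_unique'[OF fb2 NU_fbm[OF Z Y]])
  then show ?thesis unfolding c .
qed


lemma surv_lower_meas: "(\<lambda>s. measure M {\<omega>\<in>space M. s \<le> Z \<omega>}) \<in> borel_measurable borel"
  if Z[measurable]: "Z \<in> borel_measurable M" for Z :: "'a \<Rightarrow> real"
proof -
  have "mono (\<lambda>s. - measure M {\<omega>\<in>space M. s \<le> Z \<omega>})"
  proof (rule monoI)
    fix x y :: real assume "x \<le> y"
    then have "measure M {\<omega>\<in>space M. y \<le> Z \<omega>} \<le> measure M {\<omega>\<in>space M. x \<le> Z \<omega>}"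
      by (intro finite_measure_mono) auto
    then show "- measure M {\<omega>\<in>space M. x \<le> Z \<omega>} \<le> - measure M {\<omega>\<in>space M. y \<le> Z \<omega>}" by simp
  qed
  then have "(\<lambda>s. - measure M {\<omega>\<in>space M. s \<le> Z \<omega>}) \<in> borel_measurable borel" by (rule borel_measurable_mono)
  then have "(\<lambda>s. - (- measure M {\<omega>\<in>space M. s \<le> Z \<omega>})) \<in> borel_measurable borel" by measurable
  then show ?thesis by simp
qed

lemma cumhaz_eq:
  assumes Z[measurable]: "Z \<in> borel_measurable M" and Y[measurable]: "Y \<in> measurable M (count_space UNIV)"
  shows "cumhaz M Z Y k t = (LINT s:{0<..t}|NU Z Y k. 1 / measure M {\<omega>\<in>space M. s \<le> Z \<omega>})"
  unfolding cumhaz_def NU_interval[OF Z Y] left_lim_surv[OF Z] ..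

lemma cumhaz_cell:
  assumes Z[measurable]: "Z \<in> borel_measurable M" and Y[measurable]: "Y \<in> measurable M (count_space UNIV)"
    and ab: "0 \<le> a" "a < b" and pos: "measure M {\<omega>\<in>space M. b \<le> Z \<omega>} > 0"
  shows "measure M {\<omega>\<in>space M. a < Z \<omega> \<and> Z \<omega> < b \<and> Y \<omega> = k} / measure M {\<omega>\<in>space M. a < Z \<omega>}
       + measure M {\<omega>\<in>space M. Z \<omega> = b \<and> Y \<omega> = k} / measure M {\<omega>\<in>space M. b \<le> Z \<omega>}
     \<le> cumhaz M Z Y k b - cumhaz M Z Y k a"
    "cumhaz M Z Y k b - cumhaz M Z Y k a \<le>
       measure M {\<omega>\<in>space M. a < Z \<omega> \<and> Z \<omega> < b \<and> Y \<omega> = k} / measure M {\<omega>\<in>space M. b \<le> Z \<omega>}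
       + measure M {\<omega>\<in>space M. Z \<omega> = b \<and> Y \<omega> = k} / measure M {\<omega>\<in>space M. b \<le> Z \<omega>}"
proof -
  define N where "N = NU Z Y k"
  interpret N: finite_borel_measure N unfolding N_def by (rule NU_fbm[OF Z Y])
  define g where "g s = measure M {\<omega>\<in>space M. s \<le> Z \<omega>}" for s
  define f where "f s = 1 / g s" for s
  define SY where "SY = g b"
  define SP where "SP = measure M {\<omega>\<in>space M. a < Z \<omega>}"
  have SYpos: "SY > 0" using pos unfolding SY_def g_def .
  have gm: "g \<in> borel_measurable borel" unfolding g_def by (rule surv_lower_meas[OF Z])
  have fm[measurable]: "f \<in> borel_measurable borel" unfolding f_def using gm by measurable
  have sN: "sets N = sets borel" using N.M_is_borel .
  have gb: "SY \<le> g s" if "s \<le> b" for s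
    unfolding SY_def g_def using that by (intro finite_measure_mono) auto
  have fb: "0 \<le> f s \<and> f s \<le> 1 / SY" if "s \<le> b" for s
    using gb[OF that] SYpos unfolding f_def by (auto simp: frac_le)
  have si: "set_integrable N A f" if "A \<subseteq> {..b}" "A \<in> sets borel" for A
    unfolding set_integrable_def
  proof (rule N.integrable_const_bound[where B = "1 / SY"])
    show "AE x in N. norm (indicator A x *\<^sub>R f x) \<le> 1 / SY"
    proof (rule AE_I2)
      fix x show "norm (indicator A x *\<^sub>R f x) \<le> 1 / SY"
      proof (cases "x \<in> A")
        case True then show ?thesis using fb[of x] that(1) by auto
      qed (use SYpos in auto)
    qed
    show "(\<lambda>x. indicator A x *\<^sub>R f x) \<in> borel_measurable N"
      using that(2) by (simp add: measurable_cong_sets[OF sN refl] borel_measurable_indicator)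
  qed
  have ch: "cumhaz M Z Y k t = (LINT s:{0<..t}|N. f s)" for t
    unfolding cumhaz_eq[OF Z Y] N_def f_def g_def ..
  have split: "{0<..b} = {0<..a} \<union> ({a<..<b} \<union> {b})" using ab by auto
  have u2: "(LINT s:({a<..<b} \<union> {b})|N. f s) = (LINT s:{a<..<b}|N. f s) + (LINT s:{b}|N. f s)"
    by (rule set_integral_Un) (use ab in \<open>auto intro!: si\<close>)
  have u1: "(LINT s:({0<..a} \<union> ({a<..<b} \<union> {b}))|N. f s) = (LINT s:{0<..a}|N. f s) + (LINT s:({a<..<b} \<union> {b})|N. f s)"
    by (rule set_integral_Un) (use ab in \<open>auto intro!: si\<close>)
  have "(LINT s:{0<..b}|N. f s) = (LINT s:{0<..a}|N. f s) + ((LINT s:{a<..<b}|N. f s) + (LINT s:{b}|N. f s))"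
    unfolding split u1 u2 ..
  then have diff: "cumhaz M Z Y k b - cumhaz M Z Y k a = (LINT s:{a<..<b}|N. f s) + (LINT s:{b}|N. f s)"
    unfolding ch by simp
  have atom: "(LINT s:{b}|N. f s) = measure N {b} * f b"
  proof -
    have "(LINT s:{b}|N. f s) = (LINT s:{b}|N. f b)"
      unfolding set_lebesgue_integral_def by (intro Bochner_Integration.integral_cong) (auto simp: indicator_def)
    also have "\<dots> = measure N {b} * f b" by (subst set_integral_const) (auto simp: sN N.emeasure_real)
    finally show ?thesis .
  qed
  have mO: "measure N {a<..<b} = measure M {\<omega>\<in>space M. a < Z \<omega> \<and> Z \<omega> < b \<and> Y \<omega> = k}"
    unfolding N_def by (subst NU_measure[OF Z Y]) auto
  have mA: "measure N {b} = measure M {\<omega>\<in>space M. Z \<omega> = b \<and> Y \<omega> = k}"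
    unfolding N_def by (subst NU_measure[OF Z Y]) auto
  have cO: "(LINT s:{a<..<b}|N. (c::real)) = measure N {a<..<b} * c" for c
    by (subst set_integral_const) (auto simp: sN N.emeasure_real)
  have SPpos: "SP \<ge> SY" unfolding SP_def SY_def g_def using ab by (intro finite_measure_mono) auto
  have lo: "(LINT s:{a<..<b}|N. 1 / SP) \<le> (LINT s:{a<..<b}|N. f s)"
  proof (rule set_integral_mono)
    show "set_integrable N {a<..<b} (\<lambda>s. 1 / SP)"
      unfolding set_integrable_def
      by (rule N.integrable_const_bound[where B = "\<bar>1 / SP\<bar>"]) (auto simp: indicator_def sN cong: measurable_cong_sets)
    show "set_integrable N {a<..<b} f" by (rule si) auto
    fix s assume s: "s \<in> {a<..<b}"
    have "g s \<le> SP" unfolding SP_def g_def using s by (intro finite_measure_mono) auto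
    moreover have "g s \<ge> SY" using gb[of s] s by auto
    ultimately show "1 / SP \<le> f s" unfolding f_def using SYpos by (auto simp: frac_le)
  qed
  have hi: "(LINT s:{a<..<b}|N. f s) \<le> (LINT s:{a<..<b}|N. 1 / SY)"
  proof (rule set_integral_mono)
    show "set_integrable N {a<..<b} (\<lambda>s. 1 / SY)"
      unfolding set_integrable_def
      by (rule N.integrable_const_bound[where B = "\<bar>1 / SY\<bar>"]) (auto simp: indicator_def sN cong: measurable_cong_sets)
    show "set_integrable N {a<..<b} f" by (rule si) auto
    fix s assume s: "s \<in> {a<..<b}"
    show "f s \<le> 1 / SY" using fb[of s] s by auto
  qed
  show "measure M {\<omega>\<in>space M. a < Z \<omega> \<and> Z \<omega> < b \<and> Y \<omega> = k} / measure M {\<omega>\<in>space M. a < Z \<omega>}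
       + measure M {\<omega>\<in>space M. Z \<omega> = b \<and> Y \<omega> = k} / measure M {\<omega>\<in>space M. b \<le> Z \<omega>}
     \<le> cumhaz M Z Y k b - cumhaz M Z Y k a"
    using lo unfolding diff atom cO mO mA SP_def[symmetric] f_def SY_def[symmetric] g_def[symmetric]
    by simp
  show "cumhaz M Z Y k b - cumhaz M Z Y k a \<le>
       measure M {\<omega>\<in>space M. a < Z \<omega> \<and> Z \<omega> < b \<and> Y \<omega> = k} / measure M {\<omega>\<in>space M. b \<le> Z \<omega>}
       + measure M {\<omega>\<in>space M. Z \<omega> = b \<and> Y \<omega> = k} / measure M {\<omega>\<in>space M. b \<le> Z \<omega>}"
    using hi unfolding diff atom cO mO mA f_def SY_def[symmetric] g_def[symmetric]
    by simp
qed

end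

lemma inv_diff_bound:
  fixes x c SA SB :: real
  assumes "0 < c" "c \<le> SB" "SB \<le> SA" "0 \<le> x"
  shows "x * (1 / SB - 1 / SA) \<le> x * (SA - SB) / c\<^sup>2"
proof -
  have "1 / SB - 1 / SA = (SA - SB) / (SA * SB)" using assms by (simp add: field_simps)
  also have "\<dots> \<le> (SA - SB) / c\<^sup>2"
  proof (rule divide_left_mono)
    show "0 \<le> SA - SB" using assms by simp
    show "c\<^sup>2 \<le> SA * SB" unfolding power2_eq_square using assms by (intro mult_mono) auto
    show "0 < SA * SB * c\<^sup>2" using assms by simp
  qed
  finally show ?thesis using assms(4) by (simp add: mult_left_mono times_divide_eq_right[symmetric] del: times_divide_eq_right)
qed

context prob_space
begin

lemma sum_measure_Y:
  assumes [measurable]: "Y \<in> measurable M (count_space UNIV)" and [measurable]: "Measurable.pred M P"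
    and fin: "finite K"
  shows "(\<Sum>k\<in>K. measure M {\<omega>\<in>space M. P \<omega> \<and> Y \<omega> = k}) = measure M {\<omega>\<in>space M. P \<omega> \<and> Y \<omega> \<in> K}"
proof -
  have "measure M (\<Union>k\<in>K. {\<omega>\<in>space M. P \<omega> \<and> Y \<omega> = k}) = (\<Sum>k\<in>K. measure M {\<omega>\<in>space M. P \<omega> \<and> Y \<omega> = k})"
    by (rule finite_measure_finite_Union[OF fin]) (auto simp: disjoint_family_on_def)
  moreover have "(\<Union>k\<in>K. {\<omega>\<in>space M. P \<omega> \<and> Y \<omega> = k}) = {\<omega>\<in>space M. P \<omega> \<and> Y \<omega> \<in> K}" by auto
  ultimately show ?thesis by simp
qed

lemma subdist_diff:
  assumes Z[measurable]: "Z \<in> borel_measurable M" and Y[measurable]: "Y \<in> measurable M (count_space UNIV)"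
    and ab: "a < b"
  shows "subdist M Z Y k b - subdist M Z Y k a =
    measure M {\<omega>\<in>space M. a < Z \<omega> \<and> Z \<omega> < b \<and> Y \<omega> = k} + measure M {\<omega>\<in>space M. Z \<omega> = b \<and> Y \<omega> = k}"
proof -
  have e: "{\<omega>\<in>space M. Z \<omega> \<le> b \<and> Y \<omega> = k} = {\<omega>\<in>space M. Z \<omega> \<le> a \<and> Y \<omega> = k} \<union>
     ({\<omega>\<in>space M. a < Z \<omega> \<and> Z \<omega> < b \<and> Y \<omega> = k} \<union> {\<omega>\<in>space M. Z \<omega> = b \<and> Y \<omega> = k})"
    using ab by auto
  have "measure M {\<omega>\<in>space M. Z \<omega> \<le> b \<and> Y \<omega> = k} = measure M {\<omega>\<in>space M. Z \<omega> \<le> a \<and> Y \<omega> = k} +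
     (measure M {\<omega>\<in>space M. a < Z \<omega> \<and> Z \<omega> < b \<and> Y \<omega> = k} + measure M {\<omega>\<in>space M. Z \<omega> = b \<and> Y \<omega> = k})"
    unfolding e using ab by (subst finite_measure_Union; (subst finite_measure_Union)?) auto
  then show ?thesis unfolding subdist_def by simp
qed

lemma surv_diff:
  assumes Z[measurable]: "Z \<in> borel_measurable M" and ab: "a < b"
  shows "surv M Z a - measure M {\<omega>\<in>space M. b \<le> Z \<omega>} = measure M {\<omega>\<in>space M. a < Z \<omega> \<and> Z \<omega> < b}"
proof -
  have e: "{\<omega>\<in>space M. a < Z \<omega>} = {\<omega>\<in>space M. a < Z \<omega> \<and> Z \<omega> < b} \<union> {\<omega>\<in>space M. b \<le> Z \<omega>}"
    using ab by auto
  have "surv M Z a = measure M {\<omega>\<in>space M. a < Z \<omega> \<and> Z \<omega> < b} + measure M {\<omega>\<in>space M. b \<le> Z \<omega>}"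
    unfolding surv_def e by (subst finite_measure_Union) auto
  then show ?thesis by simp
qed

lemma cumhaz_0: "cumhaz M Z Y k 0 = 0"
  unfolding cumhaz_def by (simp add: set_lebesgue_integral_def)

end

context AJset
begin

lemma surv_T_eq: "surv M T a = 1 - (\<Sum>k\<in>{1..d}. subdist M T D k a)"
proof -
  have "(\<Sum>k\<in>{1..d}. subdist M T D k a) = measure M {\<omega>\<in>space M. T \<omega> \<le> a \<and> D \<omega> \<in> {1..d}}"
    unfolding subdist_def by (rule sum_measure_Y) auto
  also have "\<dots> = measure M {\<omega>\<in>space M. T \<omega> \<le> a}"
    using D_range by (intro arg_cong[where f="measure M"]) auto
  also have "\<dots> = 1 - surv M T a"
  proof -
    have "{\<omega>\<in>space M. T \<omega> \<le> a} = space M - {\<omega>\<in>space M. a < T \<omega>}" by auto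
    then show ?thesis unfolding surv_def by (simp add: prob_compl)
  qed
  finally show ?thesis by simp
qed

lemma subdist_T_0: "subdist M T D k 0 = 0"
proof -
  have "{\<omega>\<in>space M. T \<omega> \<le> 0 \<and> D \<omega> = k} = {}" using T_pos by force
  then show ?thesis unfolding subdist_def by (metis measure_empty)
qed

lemma Fh_0: "Fh xs n d k 0 = 0"
proof -
  have "Jall xs n d \<inter> {..0} = {}" unfolding Jall_def by auto
  then show ?thesis unfolding Fh_def by simp
qed


definition "lo k a b = pN k a b / pP a + pA k b / pY b"
definition "hi k a b = pN k a b / pY b + pA k b / pY b"
definition "xpv a b = (\<Sum>k'\<in>{1..d}. pN k' a b / pY b)"
definition "wv k a b = (subdist M T D k b - subdist M T D k a) / surv M T a"
definition "mT a b = measure M {\<omega>\<in>space M. a < Tt \<omega> \<and> Tt \<omega> < b}"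
definition "mM a b = measure M {\<omega>\<in>space M. a < T \<omega> \<and> T \<omega> < b}"

lemma cell_det:
  assumes ab: "0 \<le> a" "a < b" "b \<le> t" and c: "c = surv M Tt t" "c > 0" and k: "k \<in> {1..d}"
  shows "lo k a b \<le> cumhaz M Tt Dt k b - cumhaz M Tt Dt k a"
    "cumhaz M Tt Dt k b - cumhaz M Tt Dt k a \<le> hi k a b"
    "\<bar>cumhaz M T D k b - cumhaz M T D k a - wv k a b\<bar> \<le> (subdist M T D k b - subdist M T D k a) * mM a b / c\<^sup>2"
    "hi k a b - lo k a b \<le> (subdist M Tt Dt k b - subdist M Tt Dt k a) * mT a b / c\<^sup>2"
    "0 \<le> lo k a b"
    "xpv a b \<le> real d * mT a b / c"
    "hi k a b \<le> (subdist M Tt Dt k b - subdist M Tt Dt k a) / c"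
    "c \<le> surv M T a" "surv M T a \<le> 1"
proof -
  have cY: "c \<le> pY b" unfolding c pY_def surv_def using ab by (intro finite_measure_mono) auto
  have cP: "pY b \<le> pP a" unfolding pP_def pY_def using ab by (intro finite_measure_mono) auto
  define SB where "SB = measure M {\<omega>\<in>space M. b \<le> T \<omega>}"
  define SA where "SA = surv M T a"
  have YB: "pY b \<le> SB" unfolding pY_def SB_def using Tt_pos by (intro finite_measure_mono) force+
  have BA: "SB \<le> SA" unfolding SB_def SA_def surv_def using ab by (intro finite_measure_mono) auto
  have Ft: "subdist M Tt Dt k b - subdist M Tt Dt k a = pN k a b + pA k b"
    unfolding pN_def pA_def by (rule subdist_diff) (use ab in auto)
  have F: "subdist M T D k b - subdist M T D k a =
      measure M {\<omega>\<in>space M. a < T \<omega> \<and> T \<omega> < b \<and> D \<omega> = k} + measure M {\<omega>\<in>space M. T \<omega> = b \<and> D \<omega> = k}"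
    by (rule subdist_diff) (use ab in auto)
  have PmY: "pP a - pY b = mT a b"
    using surv_diff[OF Tt_meas ab(2)] unfolding pP_def pY_def mT_def surv_def by simp
  have AmB: "SA - SB = mM a b"
    using surv_diff[OF T_meas ab(2)] unfolding SA_def SB_def mM_def by simp
  have pNmT: "pN k' a b \<le> mT a b" for k' unfolding pN_def mT_def by (intro finite_measure_mono) auto
  have c0: "0 < pY b" using c cY by simp
  have ch_t: "lo k a b \<le> cumhaz M Tt Dt k b - cumhaz M Tt Dt k a \<and> cumhaz M Tt Dt k b - cumhaz M Tt Dt k a \<le> hi k a b"
    using cumhaz_cell[OF Tt_meas Dt_meas ab(1,2), of k] c0
    unfolding lo_def hi_def pN_def pA_def pP_def pY_def by auto
  then show "lo k a b \<le> cumhaz M Tt Dt k b - cumhaz M Tt Dt k a"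
    "cumhaz M Tt Dt k b - cumhaz M Tt Dt k a \<le> hi k a b" by auto
  define qN where "qN = measure M {\<omega>\<in>space M. a < T \<omega> \<and> T \<omega> < b \<and> D \<omega> = k}"
  define qA where "qA = measure M {\<omega>\<in>space M. T \<omega> = b \<and> D \<omega> = k}"
  have SB0: "0 < SB" using c0 YB by simp
  have chT: "qN / SA + qA / SB \<le> cumhaz M T D k b - cumhaz M T D k a"
      "cumhaz M T D k b - cumhaz M T D k a \<le> qN / SB + qA / SB"
    using cumhaz_cell[OF T_meas D_meas ab(1,2), of k] SB0
    unfolding qN_def qA_def SA_def SB_def surv_def by auto
  have w: "wv k a b = (qN + qA) / SA" unfolding wv_def F qN_def qA_def SA_def ..
  have q0: "0 \<le> qN" "0 \<le> qA" unfolding qN_def qA_def by auto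
  have "cumhaz M T D k b - cumhaz M T D k a - wv k a b \<ge> 0"
  proof -
    have "qA / SA \<le> qA / SB" using q0 SB0 BA by (intro divide_left_mono) auto
    then show ?thesis using chT(1) unfolding w by (simp add: add_divide_distrib)
  qed
  moreover have "cumhaz M T D k b - cumhaz M T D k a - wv k a b \<le> (qN + qA) * (1 / SB - 1 / SA)"
    using chT(2) unfolding w by (simp add: algebra_simps add_divide_distrib)
  moreover have "(qN + qA) * (1 / SB - 1 / SA) \<le> (qN + qA) * (SA - SB) / c\<^sup>2"
    by (rule inv_diff_bound) (use c cY YB BA q0 in auto)
  ultimately show "\<bar>cumhaz M T D k b - cumhaz M T D k a - wv k a b\<bar> \<le> (subdist M T D k b - subdist M T D k a) * mM a b / c\<^sup>2"
    unfolding F qN_def[symmetric] qA_def[symmetric] AmB[symmetric] by simp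
  have "hi k a b - lo k a b = pN k a b * (1 / pY b - 1 / pP a)" unfolding hi_def lo_def by (simp add: algebra_simps)
  also have "\<dots> \<le> pN k a b * (pP a - pY b) / c\<^sup>2"
    by (rule inv_diff_bound) (use c cY cP in \<open>auto simp: pN_def\<close>)
  also have "\<dots> \<le> (subdist M Tt Dt k b - subdist M Tt Dt k a) * mT a b / c\<^sup>2"
    unfolding Ft PmY using c by (intro divide_right_mono mult_right_mono) (auto simp: pA_def mT_def)
  finally show "hi k a b - lo k a b \<le> (subdist M Tt Dt k b - subdist M Tt Dt k a) * mT a b / c\<^sup>2" .
  show "0 \<le> lo k a b" unfolding lo_def pN_def pA_def pP_def pY_def by simp
  have "xpv a b \<le> (\<Sum>k'\<in>{1..d}. mT a b / c)" unfolding xpv_def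
  proof (rule sum_mono)
    fix k' show "pN k' a b / pY b \<le> mT a b / c"
      using pNmT[of k'] c cY by (intro frac_le) (auto simp: pN_def mT_def)
  qed
  then show "xpv a b \<le> real d * mT a b / c" by simp
  show "hi k a b \<le> (subdist M Tt Dt k b - subdist M Tt Dt k a) / c"
    unfolding hi_def Ft add_divide_distrib[symmetric] using c cY
    by (intro divide_left_mono) (auto simp: pN_def pA_def)
  show "c \<le> surv M T a" using cY YB BA unfolding SA_def by simp
  show "surv M T a \<le> 1" unfolding surv_def by simp
qed


lemma open_interval_bound:
  fixes Z :: "'a \<Rightarrow> real"
  assumes Z[measurable]: "Z \<in> borel_measurable M" and ab: "a < b"
    and bnd: "\<And>x. a < x \<Longrightarrow> x < b \<Longrightarrow> measure M {\<omega>\<in>space M. Z \<omega> \<le> x} - measure M {\<omega>\<in>space M. Z \<omega> \<le> a} \<le> \<epsilon>"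
  shows "measure M {\<omega>\<in>space M. a < Z \<omega> \<and> Z \<omega> < b} \<le> \<epsilon>"
proof -
  let ?mu = "distr M borel Z"
  have fb: "finite_borel_measure ?mu"
    using real_distribution_distr[OF Z] by (simp add: real_distribution.finite_borel_measure_M)
  have cdf: "cdf ?mu x = measure M {\<omega>\<in>space M. Z \<omega> \<le> x}" for x
    unfolding cdf_def by (subst measure_distr) (auto intro!: arg_cong[where f="measure M"])
  have lt: "measure ?mu {..<b} = measure M {\<omega>\<in>space M. Z \<omega> < b}"
    by (subst measure_distr) (auto intro!: arg_cong[where f="measure M"])
  have "((\<lambda>x. cdf ?mu x - cdf ?mu a) \<longlongrightarrow> measure ?mu {..<b} - cdf ?mu a) (at_left b)"
    by (intro tendsto_diff tendsto_const finite_borel_measure.cdf_at_left[OF fb])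
  moreover have "eventually (\<lambda>x. cdf ?mu x - cdf ?mu a \<le> \<epsilon>) (at_left b)"
    using eventually_at_left_real[OF ab] by eventually_elim (use bnd in \<open>auto simp: cdf\<close>)
  ultimately have "measure ?mu {..<b} - cdf ?mu a \<le> \<epsilon>"
    by (intro tendsto_upperbound) (auto simp: trivial_limit_at_left_real)
  moreover have "measure M {\<omega>\<in>space M. Z \<omega> < b} = measure M {\<omega>\<in>space M. Z \<omega> \<le> a} + measure M {\<omega>\<in>space M. a < Z \<omega> \<and> Z \<omega> < b}"
  proof -
    have "{\<omega>\<in>space M. Z \<omega> < b} = {\<omega>\<in>space M. Z \<omega> \<le> a} \<union> {\<omega>\<in>space M. a < Z \<omega> \<and> Z \<omega> < b}"
      using ab by auto
    moreover have "measure M ({\<omega>\<in>space M. Z \<omega> \<le> a} \<union> {\<omega>\<in>space M. a < Z \<omega> \<and> Z \<omega> < b}) =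
       measure M {\<omega>\<in>space M. Z \<omega> \<le> a} + measure M {\<omega>\<in>space M. a < Z \<omega> \<and> Z \<omega> < b}"
      by (rule finite_measure_Union) auto
    ultimately show ?thesis by simp
  qed
  ultimately show ?thesis unfolding lt cdf by simp
qed

lemma grid_TT:
  assumes e: "\<epsilon> > 0" and t: "0 \<le> t"
  shows "\<exists>K g. g 0 = 0 \<and> g K = t \<and> (\<forall>i<K. g i \<le> g (Suc i)) \<and>
     (\<forall>i<K. mT (g i) (g (Suc i)) \<le> \<epsilon> \<and> mM (g i) (g (Suc i)) \<le> \<epsilon>)"
proof -
  let ?m1 = "distr M borel Tt" and ?m2 = "distr M borel T"
  interpret f1: finite_borel_measure ?m1
    using real_distribution_distr[OF Tt_meas] by (simp add: real_distribution.finite_borel_measure_M)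
  interpret f2: finite_borel_measure ?m2
    using real_distribution_distr[OF T_meas] by (simp add: real_distribution.finite_borel_measure_M)
  have cdf1: "cdf ?m1 x = measure M {\<omega>\<in>space M. Tt \<omega> \<le> x}" for x
    unfolding cdf_def by (subst measure_distr) (auto intro!: arg_cong[where f="measure M"])
  have cdf2: "cdf ?m2 x = measure M {\<omega>\<in>space M. T \<omega> \<le> x}" for x
    unfolding cdf_def by (subst measure_distr) (auto intro!: arg_cong[where f="measure M"])
  define \<Phi> where "\<Phi> x = cdf ?m1 x + cdf ?m2 x" for x
  have "\<exists>K g. g 0 = 0 \<and> g K = t \<and> (\<forall>i<K. g i \<le> g (Suc i)) \<and>
     (\<forall>i<K. \<forall>x. g i < x \<and> x < g (Suc i) \<longrightarrow> \<Phi> x - \<Phi> (g i) \<le> \<epsilon>)"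
  proof (rule grid_exists[OF _ _ _ e t])
    show "\<Phi> x \<le> \<Phi> y" if "x \<le> y" for x y
      unfolding \<Phi>_def using that by (intro add_mono f1.cdf_nondecreasing f2.cdf_nondecreasing)
    show "continuous (at_right x) \<Phi>" for x
      unfolding \<Phi>_def by (intro continuous_add f1.cdf_is_right_cont f2.cdf_is_right_cont)
    show "\<Phi> x \<le> 2" for x
    proof -
      have "cdf ?m1 x \<le> 1" "cdf ?m2 x \<le> 1" unfolding cdf1 cdf2 by auto
      then show ?thesis unfolding \<Phi>_def by simp
    qed
  qed
  then obtain K g where g: "g 0 = 0" "g K = t" "\<forall>i<K. g i \<le> g (Suc i)"
    "\<forall>i<K. \<forall>x. g i < x \<and> x < g (Suc i) \<longrightarrow> \<Phi> x - \<Phi> (g i) \<le> \<epsilon>" by blast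
  have "\<forall>i<K. mT (g i) (g (Suc i)) \<le> \<epsilon> \<and> mM (g i) (g (Suc i)) \<le> \<epsilon>"
  proof (intro allI impI)
    fix i assume i: "i < K"
    show "mT (g i) (g (Suc i)) \<le> \<epsilon> \<and> mM (g i) (g (Suc i)) \<le> \<epsilon>"
    proof (cases "g i < g (Suc i)")
      case False
      then have e1: "{\<omega>\<in>space M. g i < Tt \<omega> \<and> Tt \<omega> < g (Suc i)} = {}" and e2: "{\<omega>\<in>space M. g i < T \<omega> \<and> T \<omega> < g (Suc i)} = {}"
        by auto
      show ?thesis unfolding mT_def mM_def e1 e2 using e by simp
    next
      case True
      have b1: "cdf ?m1 x - cdf ?m1 (g i) \<le> \<epsilon>" "cdf ?m2 x - cdf ?m2 (g i) \<le> \<epsilon>"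
        if "g i < x" "x < g (Suc i)" for x
      proof -
        have "\<Phi> x - \<Phi> (g i) \<le> \<epsilon>" using g(4) i that by blast
        moreover have "cdf ?m1 (g i) \<le> cdf ?m1 x" "cdf ?m2 (g i) \<le> cdf ?m2 x"
          using that by (auto intro: f1.cdf_nondecreasing f2.cdf_nondecreasing)
        ultimately show "cdf ?m1 x - cdf ?m1 (g i) \<le> \<epsilon>" "cdf ?m2 x - cdf ?m2 (g i) \<le> \<epsilon>"
          unfolding \<Phi>_def by auto
      qed
      have "mT (g i) (g (Suc i)) \<le> \<epsilon>" unfolding mT_def
        by (rule open_interval_bound[OF Tt_meas True]) (use b1(1) in \<open>auto simp: cdf1\<close>)
      moreover have "mM (g i) (g (Suc i)) \<le> \<epsilon>" unfolding mM_def
        by (rule open_interval_bound[OF T_meas True]) (use b1(2) in \<open>auto simp: cdf2\<close>)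
      ultimately show ?thesis by simp
    qed
  qed
  then show ?thesis using g(1-3) by blast
qed

end

lemma E_step:
  fixes Fa Fb Ga Gb W w :: "nat \<Rightarrow> real" and sa Sa :: real and K :: "nat set"
  assumes fin: "finite K"
    and Fb: "\<And>k. k \<in> K \<Longrightarrow> Fb k = Fa k + sa * W k"
    and Gb: "\<And>k. k \<in> K \<Longrightarrow> Gb k = Ga k + Sa * w k"
    and sa: "sa = 1 - (\<Sum>k\<in>K. Fa k)" and Sa: "Sa = 1 - (\<Sum>k\<in>K. Ga k)"
    and W0: "\<And>k. k \<in> K \<Longrightarrow> 0 \<le> W k" and W1: "(\<Sum>k\<in>K. W k) \<le> 1" and S01: "0 \<le> Sa" "Sa \<le> 1"
  shows "(\<Sum>k\<in>K. \<bar>Fb k - Gb k\<bar>) + \<bar>\<Sum>k\<in>K. Fb k - Gb k\<bar> \<le>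
     (\<Sum>k\<in>K. \<bar>Fa k - Ga k\<bar>) + \<bar>\<Sum>k\<in>K. Fa k - Ga k\<bar> + 2 * (\<Sum>k\<in>K. \<bar>W k - w k\<bar>)"
proof -
  define \<sigma> where "\<sigma> = (\<Sum>k\<in>K. Fa k - Ga k)"
  have sd: "sa - Sa = - \<sigma>" unfolding sa Sa \<sigma>_def by (simp add: sum_subtractf)
  have diff: "Fb k - Gb k = (Fa k - Ga k) - \<sigma> * W k + Sa * (W k - w k)" if "k \<in> K" for k
  proof -
    have "Fb k - Gb k = (Fa k - Ga k) + (sa - Sa) * W k + Sa * (W k - w k)"
      using Fb[OF that] Gb[OF that] by (simp add: algebra_simps)
    then show ?thesis unfolding sd by simp
  qed
  have t1: "\<bar>Fb k - Gb k\<bar> \<le> \<bar>Fa k - Ga k\<bar> + \<bar>\<sigma>\<bar> * W k + Sa * \<bar>W k - w k\<bar>" if "k \<in> K" for k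
  proof -
    have "\<bar>(Fa k - Ga k) - \<sigma> * W k + Sa * (W k - w k)\<bar> \<le> \<bar>Fa k - Ga k\<bar> + \<bar>\<sigma> * W k\<bar> + \<bar>Sa * (W k - w k)\<bar>"
      by linarith
    also have "\<dots> = \<bar>Fa k - Ga k\<bar> + \<bar>\<sigma>\<bar> * W k + Sa * \<bar>W k - w k\<bar>"
      using W0[OF that] S01 by (simp add: abs_mult)
    finally show ?thesis using diff[OF that] by simp
  qed
  have s1: "(\<Sum>k\<in>K. \<bar>Fb k - Gb k\<bar>) \<le> (\<Sum>k\<in>K. \<bar>Fa k - Ga k\<bar>) + \<bar>\<sigma>\<bar> * (\<Sum>k\<in>K. W k) + Sa * (\<Sum>k\<in>K. \<bar>W k - w k\<bar>)"
  proof -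
    have "(\<Sum>k\<in>K. \<bar>Fb k - Gb k\<bar>) \<le> (\<Sum>k\<in>K. \<bar>Fa k - Ga k\<bar> + \<bar>\<sigma>\<bar> * W k + Sa * \<bar>W k - w k\<bar>)"
      by (rule sum_mono) (rule t1)
    also have "\<dots> = (\<Sum>k\<in>K. \<bar>Fa k - Ga k\<bar>) + \<bar>\<sigma>\<bar> * (\<Sum>k\<in>K. W k) + Sa * (\<Sum>k\<in>K. \<bar>W k - w k\<bar>)"
      by (simp add: sum.distrib sum_distrib_left)
    finally show ?thesis .
  qed
  have "(\<Sum>k\<in>K. Fb k - Gb k) = (\<Sum>k\<in>K. (Fa k - Ga k) - \<sigma> * W k + Sa * (W k - w k))"
    by (rule sum.cong) (auto simp: diff)
  also have "\<dots> = \<sigma> * (1 - (\<Sum>k\<in>K. W k)) + Sa * (\<Sum>k\<in>K. W k - w k)"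
    unfolding \<sigma>_def by (simp add: sum.distrib sum_subtractf sum_distrib_left algebra_simps)
  finally have e2: "(\<Sum>k\<in>K. Fb k - Gb k) = \<sigma> * (1 - (\<Sum>k\<in>K. W k)) + Sa * (\<Sum>k\<in>K. W k - w k)" .
  have s2: "\<bar>\<Sum>k\<in>K. Fb k - Gb k\<bar> \<le> \<bar>\<sigma>\<bar> * (1 - (\<Sum>k\<in>K. W k)) + Sa * (\<Sum>k\<in>K. \<bar>W k - w k\<bar>)"
  proof -
    have "\<bar>\<sigma> * (1 - (\<Sum>k\<in>K. W k))\<bar> = \<bar>\<sigma>\<bar> * (1 - (\<Sum>k\<in>K. W k))" using W1 by (simp add: abs_mult)
    moreover have "\<bar>Sa * (\<Sum>k\<in>K. W k - w k)\<bar> \<le> Sa * (\<Sum>k\<in>K. \<bar>W k - w k\<bar>)"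
      using S01 by (simp add: abs_mult mult_left_mono sum_abs)
    ultimately show ?thesis unfolding e2 by linarith
  qed
  have s3: "Sa * (\<Sum>k\<in>K. \<bar>W k - w k\<bar>) \<le> (\<Sum>k\<in>K. \<bar>W k - w k\<bar>)"
    using S01 by (simp add: mult_left_le_one_le sum_nonneg)
  show ?thesis using s1 s2 s3 unfolding \<sigma>_def[symmetric] by (simp add: algebra_simps)
qed

context AJset
begin

definition "hin n \<omega> k a b = real (Nop (\<lambda>m. X m \<omega>) n k a b) / max 1 (real (Yc (\<lambda>m. X m \<omega>) n b))
   + real (cnt (\<lambda>m. X m \<omega>) n k b) / real (Yc (\<lambda>m. X m \<omega>) n b)"
definition "lon n \<omega> k a b = real (Nop (\<lambda>m. X m \<omega>) n k a b) / real (Yp (\<lambda>m. X m \<omega>) n a)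
   + real (cnt (\<lambda>m. X m \<omega>) n k b) / real (Yc (\<lambda>m. X m \<omega>) n b)"
definition "xpn n \<omega> a b = (\<Sum>k'\<in>{1..d}. real (Nop (\<lambda>m. X m \<omega>) n k' a b) / max 1 (real (Yc (\<lambda>m. X m \<omega>) n b)))"

lemma hin_meas[measurable]: "(\<lambda>\<omega>. hin n \<omega> k a b) \<in> borel_measurable M"
  unfolding hin_def by measurable
lemma lon_meas[measurable]: "(\<lambda>\<omega>. lon n \<omega> k a b) \<in> borel_measurable M"
  unfolding lon_def by measurable
lemma xpn_meas[measurable]: "(\<lambda>\<omega>. xpn n \<omega> a b) \<in> borel_measurable M"
  unfolding xpn_def by measurable

lemma Nop0: "Nop xs 0 k a b = 0" unfolding Nop_def by simp
lemma cnt0: "cnt xs 0 k b = 0" unfolding cnt_def by simp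

lemma ratio_avg: "real A / c = (real A / real n) / (c / real n)" if "n = 0 \<Longrightarrow> A = 0" for A n :: nat and c :: real
  using that by (cases "n = 0") auto

lemma avg_meas1[measurable]: "(\<lambda>\<omega>. real (Nop (\<lambda>m. X m \<omega>) n k a b) / real n) \<in> borel_measurable M" by measurable
lemma avg_meas2[measurable]: "(\<lambda>\<omega>. real (cnt (\<lambda>m. X m \<omega>) n k b) / real n) \<in> borel_measurable M" by measurable
lemma avg_meas3[measurable]: "(\<lambda>\<omega>. real (Yc (\<lambda>m. X m \<omega>) n b) / real n) \<in> borel_measurable M" by measurable
lemma avg_meas4[measurable]: "(\<lambda>\<omega>. max 1 (real (Yc (\<lambda>m. X m \<omega>) n b)) / real n) \<in> borel_measurable M" by measurable
lemma avg_meas5[measurable]: "(\<lambda>\<omega>. real (Yp (\<lambda>m. X m \<omega>) n a) / real n) \<in> borel_measurable M" by measurable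

lemma cons_q1: "pY b > 0 \<Longrightarrow> consistent M (\<lambda>n \<omega>. real (Nop (\<lambda>m. X m \<omega>) n k a b) / max 1 (real (Yc (\<lambda>m. X m \<omega>) n b))) (pN k a b / pY b)"
proof -
  assume p: "pY b > 0"
  have eq: "(\<lambda>n \<omega>. real (Nop (\<lambda>m. X m \<omega>) n k a b) / max 1 (real (Yc (\<lambda>m. X m \<omega>) n b))) =
     (\<lambda>n \<omega>. (real (Nop (\<lambda>m. X m \<omega>) n k a b) / real n) / (max 1 (real (Yc (\<lambda>m. X m \<omega>) n b)) / real n))"
    by (intro ext ratio_avg) (simp add: Nop0)
  show ?thesis unfolding eq
    by (rule consistent_divide[OF cons_Nop cons_maxYc avg_meas1 avg_meas4]) (use p in simp)
qed


lemma q1_meas[measurable]: "(\<lambda>\<omega>. real (Nop (\<lambda>m. X m \<omega>) n k a b) / max 1 (real (Yc (\<lambda>m. X m \<omega>) n b))) \<in> borel_measurable M"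
  by measurable
lemma q2_meas[measurable]: "(\<lambda>\<omega>. real (cnt (\<lambda>m. X m \<omega>) n k b) / real (Yc (\<lambda>m. X m \<omega>) n b)) \<in> borel_measurable M"
  by measurable
lemma q3_meas[measurable]: "(\<lambda>\<omega>. real (Nop (\<lambda>m. X m \<omega>) n k a b) / real (Yp (\<lambda>m. X m \<omega>) n a)) \<in> borel_measurable M"
  by measurable

lemma cons_q2: "pY b > 0 \<Longrightarrow> consistent M (\<lambda>n \<omega>. real (cnt (\<lambda>m. X m \<omega>) n k b) / real (Yc (\<lambda>m. X m \<omega>) n b)) (pA k b / pY b)"
proof -
  assume p: "pY b > 0"
  have eq: "(\<lambda>n \<omega>. real (cnt (\<lambda>m. X m \<omega>) n k b) / real (Yc (\<lambda>m. X m \<omega>) n b)) =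
     (\<lambda>n \<omega>. (real (cnt (\<lambda>m. X m \<omega>) n k b) / real n) / (real (Yc (\<lambda>m. X m \<omega>) n b) / real n))"
    by (intro ext ratio_avg) (simp add: cnt0)
  show ?thesis unfolding eq
    by (rule consistent_divide[OF cons_cnt cons_Yc avg_meas2 avg_meas3]) (use p in simp)
qed

lemma cons_q3: "pP a > 0 \<Longrightarrow> consistent M (\<lambda>n \<omega>. real (Nop (\<lambda>m. X m \<omega>) n k a b) / real (Yp (\<lambda>m. X m \<omega>) n a)) (pN k a b / pP a)"
proof -
  assume p: "pP a > 0"
  have eq: "(\<lambda>n \<omega>. real (Nop (\<lambda>m. X m \<omega>) n k a b) / real (Yp (\<lambda>m. X m \<omega>) n a)) =
     (\<lambda>n \<omega>. (real (Nop (\<lambda>m. X m \<omega>) n k a b) / real n) / (real (Yp (\<lambda>m. X m \<omega>) n a) / real n))"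
    by (intro ext ratio_avg) (simp add: Nop0)
  show ?thesis unfolding eq
    by (rule consistent_divide[OF cons_Nop cons_Yp avg_meas1 avg_meas5]) (use p in simp)
qed

lemma cons_hi: "pY b > 0 \<Longrightarrow> consistent M (\<lambda>n \<omega>. hin n \<omega> k a b) (hi k a b)"
  unfolding hin_def hi_def by (intro consistent_add cons_q1 cons_q2 q1_meas q2_meas)
lemma cons_lo: "pY b > 0 \<Longrightarrow> pP a > 0 \<Longrightarrow> consistent M (\<lambda>n \<omega>. lon n \<omega> k a b) (lo k a b)"
  unfolding lon_def lo_def by (intro consistent_add cons_q3 cons_q2 q3_meas q2_meas)
lemma cons_xp: "pY b > 0 \<Longrightarrow> consistent M (\<lambda>n \<omega>. xpn n \<omega> a b) (xpv a b)"
  unfolding xpn_def xpv_def by (intro consistent_sum cons_q1 q1_meas) auto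

lemma cons_Sh:
  assumes "\<And>k. k \<in> {1..d} \<Longrightarrow> consistent M (\<lambda>n \<omega>. Fh (\<lambda>m. X m \<omega>) n d k a) (subdist M T D k a)"
  shows "consistent M (\<lambda>n \<omega>. Sh (\<lambda>m. X m \<omega>) n d a) (surv M T a)"
proof -
  have "consistent M (\<lambda>n \<omega>. 1 - (\<Sum>k\<in>{1..d}. Fh (\<lambda>m. X m \<omega>) n d k a)) (1 - (\<Sum>k\<in>{1..d}. subdist M T D k a))"
    by (intro consistent_diff consistent_const consistent_sum assms) auto
  moreover have "Sh (\<lambda>m. X m \<omega>) n d a = 1 - (\<Sum>k\<in>{1..d}. Fh (\<lambda>m. X m \<omega>) n d k a)" for n \<omega>
    using row_sum[of "\<lambda>m. X m \<omega>" n d a] by simp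
  ultimately show ?thesis by (simp add: surv_T_eq)
qed

lemma random_cell:
  assumes "0 \<le> a" "a < b" "k \<in> {1..d}"
  shows "Sh (\<lambda>m. X m \<omega>) n d a * ((1 - xpn n \<omega> a b) * lon n \<omega> k a b) \<le> Fh (\<lambda>m. X m \<omega>) n d k b - Fh (\<lambda>m. X m \<omega>) n d k a"
    "Fh (\<lambda>m. X m \<omega>) n d k b - Fh (\<lambda>m. X m \<omega>) n d k a \<le> Sh (\<lambda>m. X m \<omega>) n d a * hin n \<omega> k a b"
proof -
  obtain W where W: "\<forall>k\<in>{1..d}. Fh (\<lambda>m. X m \<omega>) n d k b = Fh (\<lambda>m. X m \<omega>) n d k a + Sh (\<lambda>m. X m \<omega>) n d a * W k \<and> 0 \<le> W k \<and>
      W k \<le> hin n \<omega> k a b \<and> (1 - xpn n \<omega> a b) * lon n \<omega> k a b \<le> W k"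
    using cell_ineq[OF assms(1,2), of d "\<lambda>m. X m \<omega>" n] unfolding hin_def lon_def xpn_def by blast
  have S0: "0 \<le> Sh (\<lambda>m. X m \<omega>) n d a" by (rule Sh_bounds)
  show "Sh (\<lambda>m. X m \<omega>) n d a * ((1 - xpn n \<omega> a b) * lon n \<omega> k a b) \<le> Fh (\<lambda>m. X m \<omega>) n d k b - Fh (\<lambda>m. X m \<omega>) n d k a"
    using W assms(3) S0 by (auto intro: mult_left_mono)
  show "Fh (\<lambda>m. X m \<omega>) n d k b - Fh (\<lambda>m. X m \<omega>) n d k a \<le> Sh (\<lambda>m. X m \<omega>) n d a * hin n \<omega> k a b"
    using W assms(3) S0 by (auto intro: mult_left_mono)
qed


definition "BND c k a b = (subdist M Tt Dt k b - subdist M Tt Dt k a) * mT a b / c\<^sup>2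
   + (real d * mT a b / c) * ((subdist M Tt Dt k b - subdist M Tt Dt k a) / c)
   + (subdist M T D k b - subdist M T D k a) * mM a b / c\<^sup>2"

lemma surv_Tt_mono: "x \<le> y \<Longrightarrow> surv M Tt y \<le> surv M Tt x"
  unfolding surv_def by (intro finite_measure_mono) auto

lemma c_le_pY: "b \<le> t \<Longrightarrow> surv M Tt t \<le> pY b"
  unfolding pY_def surv_def by (intro finite_measure_mono) auto
lemma c_le_pP: "a \<le> t \<Longrightarrow> surv M Tt t \<le> pP a"
  unfolding pP_def surv_def by (intro finite_measure_mono) auto

lemma fwd_cell:
  assumes cons: "\<And>t' k. 0 \<le> t' \<Longrightarrow> surv M Tt t' > 0 \<Longrightarrow> k \<in> {1..d} \<Longrightarrow>
      consistent M (\<lambda>n \<omega>. Fh (\<lambda>m. X m \<omega>) n d k t') (subdist M T D k t')"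
    and ab: "0 \<le> a" "a < b" "b \<le> t" and c: "c = surv M Tt t" "c > 0" and k: "k \<in> {1..d}"
  shows "\<bar>(cumhaz M T D k b - cumhaz M T D k a) - (cumhaz M Tt Dt k b - cumhaz M Tt Dt k a)\<bar> \<le> BND c k a b"
proof -
  have Ja: "surv M Tt a > 0" using surv_Tt_mono[of a t] ab c by simp
  have Jb: "surv M Tt b > 0" using surv_Tt_mono[of b t] ab c by simp
  have pYb: "pY b > 0" using c_le_pY[OF ab(3)] c by simp
  have pPa: "pP a > 0" using c_le_pP[where a=a and t=t] ab c by simp
  have cA: "\<And>k'. k' \<in> {1..d} \<Longrightarrow> consistent M (\<lambda>n \<omega>. Fh (\<lambda>m. X m \<omega>) n d k' a) (subdist M T D k' a)"
    using cons[OF ab(1) Ja] .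
  have cB: "consistent M (\<lambda>n \<omega>. Fh (\<lambda>m. X m \<omega>) n d k b) (subdist M T D k b)"
    using cons[OF _ Jb k] ab by simp
  have cS: "consistent M (\<lambda>n \<omega>. Sh (\<lambda>m. X m \<omega>) n d a) (surv M T a)" by (rule cons_Sh[OF cA])
  have cD: "consistent M (\<lambda>n \<omega>. Fh (\<lambda>m. X m \<omega>) n d k b - Fh (\<lambda>m. X m \<omega>) n d k a) (subdist M T D k b - subdist M T D k a)"
    by (intro consistent_diff cB cA k) measurable
  have c1x: "consistent M (\<lambda>n \<omega>. 1 - xpn n \<omega> a b) (1 - xpv a b)"
    by (intro consistent_diff consistent_const cons_xp pYb) measurable
  have cL: "consistent M (\<lambda>n \<omega>. Sh (\<lambda>m. X m \<omega>) n d a * ((1 - xpn n \<omega> a b) * lon n \<omega> k a b))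
      (surv M T a * ((1 - xpv a b) * lo k a b))"
    by (intro consistent_mult cS c1x cons_lo pYb pPa) measurable
  have cU: "consistent M (\<lambda>n \<omega>. Sh (\<lambda>m. X m \<omega>) n d a * hin n \<omega> k a b) (surv M T a * hi k a b)"
    by (intro consistent_mult cS cons_hi pYb) measurable
  have le1: "surv M T a * ((1 - xpv a b) * lo k a b) \<le> subdist M T D k b - subdist M T D k a"
    by (rule consistent_le[OF cL cD]) (use random_cell(1)[OF ab(1,2) k] in measurable)
  have le2: "subdist M T D k b - subdist M T D k a \<le> surv M T a * hi k a b"
    by (rule consistent_le[OF cD cU]) (use random_cell(2)[OF ab(1,2) k] in measurable)
  note cd = cell_det[OF ab c k]
  have Sa: "c \<le> surv M T a" by (rule cd(8))
  have Sa0: "surv M T a > 0" using Sa c by simp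
  have w1: "(1 - xpv a b) * lo k a b \<le> wv k a b"
    unfolding wv_def using le1 Sa0 by (simp add: field_simps)
  have w2: "wv k a b \<le> hi k a b"
    unfolding wv_def using le2 Sa0 by (simp add: field_simps)
  have xp0: "0 \<le> xpv a b" unfolding xpv_def pN_def pY_def by (intro sum_nonneg) auto
  have mT0: "0 \<le> mT a b" unfolding mT_def by simp
  have lohi: "lo k a b \<le> hi k a b" using cd(1,2) by simp
  have "xpv a b * lo k a b \<le> xpv a b * hi k a b" by (rule mult_left_mono[OF lohi xp0])
  also have "\<dots> \<le> (real d * mT a b / c) * ((subdist M Tt Dt k b - subdist M Tt Dt k a) / c)"
    using cd(6,7) xp0 cd(5) lohi mT0 c by (intro mult_mono) auto
  finally have xplo: "xpv a b * lo k a b \<le> (real d * mT a b / c) * ((subdist M Tt Dt k b - subdist M Tt Dt k a) / c)" .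
  have p0: "0 \<le> xpv a b * lo k a b" using xp0 cd(5) by simp
  have w1': "lo k a b - xpv a b * lo k a b \<le> wv k a b" using w1 by (simp add: algebra_simps)
  have u1: "wv k a b - (cumhaz M Tt Dt k b - cumhaz M Tt Dt k a) \<le> (hi k a b - lo k a b) + xpv a b * lo k a b"
    using w2 cd(1) p0 by linarith
  have u2: "(cumhaz M Tt Dt k b - cumhaz M Tt Dt k a) - wv k a b \<le> (hi k a b - lo k a b) + xpv a b * lo k a b"
    using w1' cd(2) by linarith
  have "\<bar>wv k a b - (cumhaz M Tt Dt k b - cumhaz M Tt Dt k a)\<bar> \<le> (hi k a b - lo k a b) + xpv a b * lo k a b"
    using u1 u2 by (simp add: abs_le_iff)
  then show ?thesis using cd(3) cd(4) xplo unfolding BND_def by linarith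
qed


lemma subdist_mono: "a \<le> b \<Longrightarrow> subdist M Z Y k a \<le> subdist M Z Y k b"
  if [measurable]: "Z \<in> borel_measurable M" "Y \<in> measurable M (count_space UNIV)" for Z :: "'a \<Rightarrow> real" and Y
  unfolding subdist_def by (intro finite_measure_mono) auto

lemma chain_mono:
  assumes "\<forall>i<K. g i \<le> g (Suc i)" "i \<le> j" "j \<le> K"
  shows "g i \<le> (g j :: real)"
  using assms(2,3)
proof (induction j)
  case 0 then show ?case by simp
next
  case (Suc j)
  show ?case
  proof (cases "i = Suc j")
    case False
    then have "g i \<le> g j" using Suc by simp
    also have "g j \<le> g (Suc j)" using assms(1) Suc by simp
    finally show ?thesis .
  qed simp
qed

lemma BND_nonneg: "0 \<le> a \<Longrightarrow> a \<le> b \<Longrightarrow> c > 0 \<Longrightarrow> 0 \<le> BND c k a b"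
  unfolding BND_def mT_def mM_def
  using subdist_mono[OF Tt_meas Dt_meas, of a b k] subdist_mono[OF T_meas D_meas, of a b k]
  by (intro add_nonneg_nonneg mult_nonneg_nonneg divide_nonneg_nonneg) auto

lemma BND_sum:
  assumes g: "g 0 = 0" "g K = t" "\<forall>i<K. g i \<le> g (Suc i)"
    "\<forall>i<K. mT (g i) (g (Suc i)) \<le> \<epsilon> \<and> mM (g i) (g (Suc i)) \<le> \<epsilon>"
    and c: "c > 0" and e: "\<epsilon> > 0"
  shows "(\<Sum>i<K. BND c k (g i) (g (Suc i))) \<le> \<epsilon> * (2 + real d) / c\<^sup>2"
proof -
  define Ft where "Ft x = subdist M Tt Dt k x" for x
  define F where "F x = subdist M T D k x" for x
  have cell: "BND c k (g i) (g (Suc i)) \<le> \<epsilon> / c\<^sup>2 * ((1 + real d) * (Ft (g (Suc i)) - Ft (g i)) + (F (g (Suc i)) - F (g i)))"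
    if i: "i < K" for i
  proof -
    have d1: "0 \<le> Ft (g (Suc i)) - Ft (g i)" unfolding Ft_def
      using subdist_mono[OF Tt_meas Dt_meas, of "g i" "g (Suc i)" k] g(3) i by simp
    have d2: "0 \<le> F (g (Suc i)) - F (g i)" unfolding F_def
      using subdist_mono[OF T_meas D_meas, of "g i" "g (Suc i)" k] g(3) i by simp
    have m: "mT (g i) (g (Suc i)) \<le> \<epsilon>" "mM (g i) (g (Suc i)) \<le> \<epsilon>" using g(4) i by auto
    have m0: "0 \<le> mT (g i) (g (Suc i))" "0 \<le> mM (g i) (g (Suc i))" unfolding mT_def mM_def by auto
    have "BND c k (g i) (g (Suc i)) = (Ft (g (Suc i)) - Ft (g i)) * mT (g i) (g (Suc i)) / c\<^sup>2
       + real d * mT (g i) (g (Suc i)) * (Ft (g (Suc i)) - Ft (g i)) / c\<^sup>2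
       + (F (g (Suc i)) - F (g i)) * mM (g i) (g (Suc i)) / c\<^sup>2"
      unfolding BND_def Ft_def F_def by (simp add: power2_eq_square)
    also have "\<dots> \<le> (Ft (g (Suc i)) - Ft (g i)) * \<epsilon> / c\<^sup>2
       + real d * \<epsilon> * (Ft (g (Suc i)) - Ft (g i)) / c\<^sup>2
       + (F (g (Suc i)) - F (g i)) * \<epsilon> / c\<^sup>2"
      using d1 d2 m m0 c by (intro add_mono divide_right_mono mult_left_mono mult_right_mono) auto
    also have "\<dots> = \<epsilon> / c\<^sup>2 * ((1 + real d) * (Ft (g (Suc i)) - Ft (g i)) + (F (g (Suc i)) - F (g i)))"
      using c by (simp add: field_simps)
    finally show ?thesis .
  qed
  have "(\<Sum>i<K. BND c k (g i) (g (Suc i))) \<le> (\<Sum>i<K. \<epsilon> / c\<^sup>2 * ((1 + real d) * (Ft (g (Suc i)) - Ft (g i)) + (F (g (Suc i)) - F (g i))))"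
    by (rule sum_mono) (rule cell, simp)
  also have "\<dots> = \<epsilon> / c\<^sup>2 * ((1 + real d) * (Ft (g K) - Ft (g 0)) + (F (g K) - F (g 0)))"
  proof -
    have s1: "(\<Sum>i<K. (1 + real d) * (Ft (g (Suc i)) - Ft (g i)) + (F (g (Suc i)) - F (g i))) =
      (1 + real d) * (\<Sum>i<K. Ft (g (Suc i)) - Ft (g i)) + (\<Sum>i<K. F (g (Suc i)) - F (g i))"
      by (simp add: sum.distrib sum_distrib_left)
    have s2: "(\<Sum>i<K. Ft (g (Suc i)) - Ft (g i)) = Ft (g K) - Ft (g 0)"
      by (rule sum_lessThan_telescope[of "\<lambda>i. Ft (g i)"])
    have s3: "(\<Sum>i<K. F (g (Suc i)) - F (g i)) = F (g K) - F (g 0)"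
      by (rule sum_lessThan_telescope[of "\<lambda>i. F (g i)"])
    show ?thesis unfolding sum_distrib_left[symmetric] s1 s2 s3 ..
  qed
  also have "\<dots> \<le> \<epsilon> / c\<^sup>2 * ((1 + real d) * 1 + 1)"
  proof -
    have b: "Ft x \<le> 1" "0 \<le> Ft x" "F x \<le> 1" "0 \<le> F x" for x
      unfolding Ft_def F_def subdist_def by (auto simp: prob_le_1)
    have "Ft (g K) - Ft (g 0) \<le> 1" "F (g K) - F (g 0) \<le> 1"
      using b[of "g K"] b[of "g 0"] by linarith+
    then show ?thesis using c e by (intro mult_left_mono add_mono) auto
  qed
  also have "\<dots> = \<epsilon> * (2 + real d) / c\<^sup>2" by simp
  finally show ?thesis .
qed

lemma core_fwd:
  assumes cons: "\<And>t' k. 0 \<le> t' \<Longrightarrow> surv M Tt t' > 0 \<Longrightarrow> k \<in> {1..d} \<Longrightarrow>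
      consistent M (\<lambda>n \<omega>. Fh (\<lambda>m. X m \<omega>) n d k t') (subdist M T D k t')"
    and t: "0 \<le> t" "surv M Tt t > 0" and k: "k \<in> {1..d}"
  shows "cumhaz M Tt Dt k t = cumhaz M T D k t"
proof -
  define c where "c = surv M Tt t"
  have c0: "c > 0" using t c_def by simp
  define \<delta> where "\<delta> = cumhaz M T D k t - cumhaz M Tt Dt k t"
  have bound: "\<bar>\<delta>\<bar> \<le> \<epsilon> * (2 + real d) / c\<^sup>2" if e: "\<epsilon> > 0" for \<epsilon>
  proof -
    obtain K g where g: "g 0 = 0" "g K = t" "\<forall>i<K. g i \<le> g (Suc i)"
      "\<forall>i<K. mT (g i) (g (Suc i)) \<le> \<epsilon> \<and> mM (g i) (g (Suc i)) \<le> \<epsilon>"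
      using grid_TT[OF e t(1)] by blast
    have gr: "0 \<le> g i \<and> g i \<le> t" if "i \<le> K" for i
      using chain_mono[OF g(3), of 0 i] chain_mono[OF g(3), of i K] that g(1,2) by auto
    define h where "h i = (cumhaz M T D k (g i) - cumhaz M Tt Dt k (g i))" for i
    have "\<delta> = h K - h 0" unfolding h_def \<delta>_def g(1,2) by (simp add: cumhaz_0)
    also have "\<dots> = (\<Sum>i<K. h (Suc i) - h i)" by (rule sum_lessThan_telescope[symmetric])
    finally have "\<bar>\<delta>\<bar> \<le> (\<Sum>i<K. \<bar>h (Suc i) - h i\<bar>)" by (simp add: sum_abs)
    also have "\<dots> \<le> (\<Sum>i<K. BND c k (g i) (g (Suc i)))"
    proof (rule sum_mono)
      fix i assume i: "i \<in> {..<K}"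
      have a0: "0 \<le> g i" and bt: "g (Suc i) \<le> t" using gr[of i] gr[of "Suc i"] i by auto
      show "\<bar>h (Suc i) - h i\<bar> \<le> BND c k (g i) (g (Suc i))"
      proof (cases "g i < g (Suc i)")
        case True
        have "\<bar>(cumhaz M T D k (g (Suc i)) - cumhaz M T D k (g i)) - (cumhaz M Tt Dt k (g (Suc i)) - cumhaz M Tt Dt k (g i))\<bar>
            \<le> BND c k (g i) (g (Suc i))"
          by (rule fwd_cell[OF cons a0 True bt c_def c0 k])
        then show ?thesis unfolding h_def by (simp add: algebra_simps)
      next
        case False
        then have "g i = g (Suc i)" using g(3) i by force
        then show ?thesis unfolding h_def using BND_nonneg[OF a0 _ c0, of "g (Suc i)" k] by simp
      qed
    qed
    also have "\<dots> \<le> \<epsilon> * (2 + real d) / c\<^sup>2" by (rule BND_sum[OF g c0 e])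
    finally show ?thesis .
  qed
  have "\<delta> = 0"
  proof (rule ccontr)
    assume "\<delta> \<noteq> 0"
    define q where "q = 2 + real d"
    define c2 where "c2 = c\<^sup>2"
    have dd: "q > 0" "c2 > 0" using c0 unfolding q_def c2_def by auto
    define \<epsilon> where "\<epsilon> = \<bar>\<delta>\<bar> * c2 / (2 * q)"
    have e: "\<epsilon> > 0" using \<open>\<delta> \<noteq> 0\<close> dd unfolding \<epsilon>_def by simp
    have "\<epsilon> * q / c2 = \<bar>\<delta>\<bar> / 2" using dd unfolding \<epsilon>_def by (simp add: field_simps)
    then have "\<epsilon> * (2 + real d) / c\<^sup>2 = \<bar>\<delta>\<bar> / 2" unfolding q_def c2_def .
    then show False using bound[OF e] \<open>\<delta> \<noteq> 0\<close> by simp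
  qed
  then show ?thesis unfolding \<delta>_def by simp
qed

end

lemma lin3: "L \<le> 2 * A + 2 * C + B \<Longrightarrow> 0 \<le> B \<Longrightarrow> L \<le> 2 * (A + B + C)" for L A B C :: real
  unfolding distrib_left by linarith

context AJset
begin

definition "CBn n \<omega> a b = (if a < b then 2 * (\<Sum>k\<in>{1..d}. \<bar>hin n \<omega> k a b - wv k a b\<bar> +
    \<bar>wv k a b - (1 - xpn n \<omega> a b) * lon n \<omega> k a b\<bar>) else 0)"
definition "CBl a b = (if a < b then 2 * (\<Sum>k\<in>{1..d}. \<bar>hi k a b - wv k a b\<bar> +
    \<bar>wv k a b - (1 - xpv a b) * lo k a b\<bar>) else 0)"

lemma CBn_meas[measurable]: "(\<lambda>\<omega>. CBn n \<omega> a b) \<in> borel_measurable M"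
  unfolding CBn_def by measurable

lemma bwd_cell_det:
  assumes eqH: "\<And>t' k. 0 \<le> t' \<Longrightarrow> surv M Tt t' > 0 \<Longrightarrow> k \<in> {1..d} \<Longrightarrow> cumhaz M Tt Dt k t' = cumhaz M T D k t'"
    and ab: "0 \<le> a" "a \<le> b" "b \<le> t" and c: "c = surv M Tt t" "c > 0"
  shows "CBl a b \<le> 4 * (\<Sum>k\<in>{1..d}. BND c k a b)"
proof (cases "a < b")
  case False
  then show ?thesis unfolding CBl_def using BND_nonneg[OF ab(1,2) c(2)] by (simp add: sum_nonneg)
next
  case True
  have Ja: "surv M Tt a > 0" using surv_Tt_mono[of a t] ab c by simp
  have Jb: "surv M Tt b > 0" using surv_Tt_mono[of b t] ab c by simp
  have one: "\<bar>hi k a b - wv k a b\<bar> + \<bar>wv k a b - (1 - xpv a b) * lo k a b\<bar> \<le> 2 * BND c k a b" if k: "k \<in> {1..d}" for k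
  proof -
    note cd = cell_det[OF ab(1) True ab(3) c k]
    have eq: "cumhaz M Tt Dt k b - cumhaz M Tt Dt k a = cumhaz M T D k b - cumhaz M T D k a"
      using eqH[OF _ Ja k] eqH[OF _ Jb k] ab by simp
    define dH where "dH = cumhaz M T D k b - cumhaz M T D k a"
    have l: "lo k a b \<le> dH" "dH \<le> hi k a b" using cd(1,2) eq unfolding dH_def by auto
    have xp0: "0 \<le> xpv a b" unfolding xpv_def pN_def pY_def by (intro sum_nonneg) auto
    have mT0: "0 \<le> mT a b" unfolding mT_def by simp
    have lo0: "0 \<le> lo k a b" by (rule cd(5))
    have "xpv a b * lo k a b \<le> xpv a b * hi k a b" using l xp0 by (intro mult_left_mono) auto
    also have "\<dots> \<le> (real d * mT a b / c) * ((subdist M Tt Dt k b - subdist M Tt Dt k a) / c)"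
      using cd(6,7) xp0 lo0 l mT0 c by (intro mult_mono) auto
    finally have xplo: "xpv a b * lo k a b \<le> (real d * mT a b / c) * ((subdist M Tt Dt k b - subdist M Tt Dt k a) / c)" .
    have h1: "\<bar>hi k a b - wv k a b\<bar> \<le> (hi k a b - lo k a b) + \<bar>dH - wv k a b\<bar>" using l by linarith
    have "\<bar>(1 - xpv a b) * lo k a b - lo k a b\<bar> = xpv a b * lo k a b" using xp0 lo0 by (simp add: algebra_simps)
    then have h2: "\<bar>wv k a b - (1 - xpv a b) * lo k a b\<bar> \<le> \<bar>dH - wv k a b\<bar> + (hi k a b - lo k a b) + xpv a b * lo k a b"
      using l by linarith
    have "\<bar>dH - wv k a b\<bar> \<le> (subdist M T D k b - subdist M T D k a) * mM a b / c\<^sup>2" using cd(3) unfolding dH_def .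
    moreover have "0 \<le> xpv a b * lo k a b" using xp0 lo0 by simp
    ultimately have fin: "\<bar>hi k a b - wv k a b\<bar> + \<bar>wv k a b - (1 - xpv a b) * lo k a b\<bar> \<le>
        2 * ((subdist M Tt Dt k b - subdist M Tt Dt k a) * mT a b / c\<^sup>2) +
        2 * ((subdist M T D k b - subdist M T D k a) * mM a b / c\<^sup>2) +
        real d * mT a b / c * ((subdist M Tt Dt k b - subdist M Tt Dt k a) / c)"
      using h1 h2 cd(4) xplo by linarith
    have "0 \<le> real d * mT a b / c * ((subdist M Tt Dt k b - subdist M Tt Dt k a) / c)"
      using xplo \<open>0 \<le> xpv a b * lo k a b\<close> by linarith
    then show ?thesis unfolding BND_def by (rule lin3[OF fin])
  qed
  have "CBl a b = 2 * (\<Sum>k\<in>{1..d}. \<bar>hi k a b - wv k a b\<bar> + \<bar>wv k a b - (1 - xpv a b) * lo k a b\<bar>)"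
    using True by (simp add: CBl_def)
  also have "\<dots> \<le> 2 * (\<Sum>k\<in>{1..d}. 2 * BND c k a b)" by (intro mult_left_mono sum_mono one) auto
  also have "\<dots> = 4 * (\<Sum>k\<in>{1..d}. BND c k a b)" by (simp add: sum_distrib_left)
  finally show ?thesis .
qed

lemma cons_CB:
  assumes ab: "0 \<le> a" "a \<le> b" "b \<le> t" "surv M Tt t > 0"
  shows "consistent M (\<lambda>n \<omega>. CBn n \<omega> a b) (CBl a b)"
proof (cases "a < b")
  case False then show ?thesis unfolding CBn_def CBl_def by (simp add: consistent_const)
next
  case True
  have pYb: "pY b > 0" using c_le_pY[OF ab(3)] ab by simp
  have pPa: "pP a > 0" using c_le_pP[where a=a and t=t] ab by simp
  have c1x: "consistent M (\<lambda>n \<omega>. 1 - xpn n \<omega> a b) (1 - xpv a b)"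
    by (intro consistent_diff consistent_const cons_xp pYb) measurable
  have ck: "consistent M (\<lambda>n \<omega>. \<bar>hin n \<omega> k a b - wv k a b\<bar> + \<bar>wv k a b - (1 - xpn n \<omega> a b) * lon n \<omega> k a b\<bar>)
     (\<bar>hi k a b - wv k a b\<bar> + \<bar>wv k a b - (1 - xpv a b) * lo k a b\<bar>)" for k
    by (intro consistent_add consistent_abs consistent_diff consistent_const consistent_mult cons_hi cons_lo c1x pYb pPa) measurable
  have "consistent M (\<lambda>n \<omega>. 2 * (\<Sum>k\<in>{1..d}. \<bar>hin n \<omega> k a b - wv k a b\<bar> + \<bar>wv k a b - (1 - xpn n \<omega> a b) * lon n \<omega> k a b\<bar>))
      (2 * (\<Sum>k\<in>{1..d}. \<bar>hi k a b - wv k a b\<bar> + \<bar>wv k a b - (1 - xpv a b) * lo k a b\<bar>))"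
    by (intro consistent_mult consistent_const consistent_sum ck) measurable
  then show ?thesis using True unfolding CBn_def CBl_def by simp
qed


definition "Eerr \<omega> n x = (\<Sum>k\<in>{1..d}. \<bar>Fh (\<lambda>m. X m \<omega>) n d k x - subdist M T D k x\<bar>) +
   \<bar>\<Sum>k\<in>{1..d}. Fh (\<lambda>m. X m \<omega>) n d k x - subdist M T D k x\<bar>"

lemma Eerr_step:
  assumes ab: "0 \<le> a" "a \<le> b" "b \<le> t" and c: "c = surv M Tt t" "c > 0"
  shows "Eerr \<omega> n b \<le> Eerr \<omega> n a + CBn n \<omega> a b"
proof (cases "a < b")
  case False
  then have "a = b" using ab by simp
  then show ?thesis unfolding CBn_def by simp
next
  case True
  obtain W where W: "\<forall>k\<in>{1..d}. Fh (\<lambda>m. X m \<omega>) n d k b = Fh (\<lambda>m. X m \<omega>) n d k a + Sh (\<lambda>m. X m \<omega>) n d a * W k \<and> 0 \<le> W k \<and>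
      W k \<le> hin n \<omega> k a b \<and> (1 - xpn n \<omega> a b) * lon n \<omega> k a b \<le> W k"
    and Wsum: "(\<Sum>k\<in>{1..d}. W k) \<le> 1"
    using cell_ineq[OF ab(1) True, of d "\<lambda>m. X m \<omega>" n] unfolding hin_def lon_def xpn_def by blast
  have d1: "(1::nat) \<in> {1..d}" using d1 by simp
  note cd = cell_det[OF ab(1) True ab(3) c d1]
  have Sa0: "surv M T a > 0" using cd(8) c by simp
  have "(\<Sum>k\<in>{1..d}. \<bar>Fh (\<lambda>m. X m \<omega>) n d k b - subdist M T D k b\<bar>) +
     \<bar>\<Sum>k\<in>{1..d}. Fh (\<lambda>m. X m \<omega>) n d k b - subdist M T D k b\<bar> \<le>
     (\<Sum>k\<in>{1..d}. \<bar>Fh (\<lambda>m. X m \<omega>) n d k a - subdist M T D k a\<bar>) +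
     \<bar>\<Sum>k\<in>{1..d}. Fh (\<lambda>m. X m \<omega>) n d k a - subdist M T D k a\<bar> + 2 * (\<Sum>k\<in>{1..d}. \<bar>W k - wv k a b\<bar>)"
  proof (rule E_step[where sa = "Sh (\<lambda>m. X m \<omega>) n d a" and Sa = "surv M T a"])
    show "finite {1..d}" by simp
    show "Fh (\<lambda>m. X m \<omega>) n d k b = Fh (\<lambda>m. X m \<omega>) n d k a + Sh (\<lambda>m. X m \<omega>) n d a * W k" if "k \<in> {1..d}" for k
      using W that by blast
    show "subdist M T D k b = subdist M T D k a + surv M T a * wv k a b" for k
      unfolding wv_def using Sa0 by simp
    show "Sh (\<lambda>m. X m \<omega>) n d a = 1 - (\<Sum>k\<in>{1..d}. Fh (\<lambda>m. X m \<omega>) n d k a)"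
      using row_sum[of "\<lambda>m. X m \<omega>" n d a] by simp
    show "surv M T a = 1 - (\<Sum>k\<in>{1..d}. subdist M T D k a)" by (rule surv_T_eq)
    show "0 \<le> W k" if "k \<in> {1..d}" for k using W that by blast
    show "(\<Sum>k\<in>{1..d}. W k) \<le> 1" by (rule Wsum)
    show "0 \<le> surv M T a" "surv M T a \<le> 1" using cd(8,9) c by auto
  qed
  moreover have "2 * (\<Sum>k\<in>{1..d}. \<bar>W k - wv k a b\<bar>) \<le> CBn n \<omega> a b"
  proof -
    have "\<bar>W k - wv k a b\<bar> \<le> \<bar>hin n \<omega> k a b - wv k a b\<bar> + \<bar>wv k a b - (1 - xpn n \<omega> a b) * lon n \<omega> k a b\<bar>"
      if "k \<in> {1..d}" for k
    proof -
      have Wk: "W k \<le> hin n \<omega> k a b" "(1 - xpn n \<omega> a b) * lon n \<omega> k a b \<le> W k" using W that by blast+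
      have "hin n \<omega> k a b - wv k a b \<le> \<bar>hin n \<omega> k a b - wv k a b\<bar>"
        "wv k a b - (1 - xpn n \<omega> a b) * lon n \<omega> k a b \<le> \<bar>wv k a b - (1 - xpn n \<omega> a b) * lon n \<omega> k a b\<bar>"
        "0 \<le> \<bar>hin n \<omega> k a b - wv k a b\<bar>" "0 \<le> \<bar>wv k a b - (1 - xpn n \<omega> a b) * lon n \<omega> k a b\<bar>"
        by auto
      then show ?thesis using Wk unfolding abs_le_iff by linarith
    qed
    then have "(\<Sum>k\<in>{1..d}. \<bar>W k - wv k a b\<bar>) \<le> (\<Sum>k\<in>{1..d}. \<bar>hin n \<omega> k a b - wv k a b\<bar> + \<bar>wv k a b - (1 - xpn n \<omega> a b) * lon n \<omega> k a b\<bar>)"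
      by (rule sum_mono)
    then show ?thesis unfolding CBn_def using True by simp
  qed
  ultimately show ?thesis unfolding Eerr_def by linarith
qed

lemma core_bwd:
  assumes eqH: "\<And>t' k. 0 \<le> t' \<Longrightarrow> surv M Tt t' > 0 \<Longrightarrow> k \<in> {1..d} \<Longrightarrow> cumhaz M Tt Dt k t' = cumhaz M T D k t'"
    and t: "0 \<le> t" "surv M Tt t > 0" and k0: "k0 \<in> {1..d}"
  shows "consistent M (\<lambda>n \<omega>. Fh (\<lambda>m. X m \<omega>) n d k0 t) (subdist M T D k0 t)"
proof (rule consistent_bound)
  fix e :: real assume e: "e > 0"
  define c where "c = surv M Tt t"
  have c0: "c > 0" using t c_def by simp
  define q where "q = 2 + real d"
  have q0: "q > 0" unfolding q_def by simp
  have dpos: "real d > 0" using d1 by simp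
  define \<epsilon> where "\<epsilon> = e * c\<^sup>2 / (8 * real d * q)"
  have ep: "\<epsilon> > 0" unfolding \<epsilon>_def using e c0 q0 dpos by simp
  obtain K g where g: "g 0 = 0" "g K = t" "\<forall>i<K. g i \<le> g (Suc i)"
      "\<forall>i<K. mT (g i) (g (Suc i)) \<le> \<epsilon> \<and> mM (g i) (g (Suc i)) \<le> \<epsilon>"
    using grid_TT[OF ep t(1)] by blast
  have gr: "0 \<le> g i \<and> g i \<le> t" if "i \<le> K" for i
    using chain_mono[OF g(3), of 0 i] chain_mono[OF g(3), of i K] that g(1,2) by auto
  define B where "B n \<omega> = (\<Sum>i<K. CBn n \<omega> (g i) (g (Suc i)))" for n \<omega>
  define b where "b = (\<Sum>i<K. CBl (g i) (g (Suc i)))"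
  have cB: "consistent M B b" unfolding B_def b_def
  proof (rule consistent_sum)
    fix i assume i: "i \<in> {..<K}"
    show "consistent M (\<lambda>n \<omega>. CBn n \<omega> (g i) (g (Suc i))) (CBl (g i) (g (Suc i)))"
      using gr[of i] gr[of "Suc i"] g(3) i t by (intro cons_CB) auto
  qed measurable
  have "b \<le> (\<Sum>i<K. 4 * (\<Sum>k\<in>{1..d}. BND c k (g i) (g (Suc i))))"
    unfolding b_def
  proof (rule sum_mono)
    fix i assume i: "i \<in> {..<K}"
    show "CBl (g i) (g (Suc i)) \<le> 4 * (\<Sum>k\<in>{1..d}. BND c k (g i) (g (Suc i)))"
      using gr[of i] gr[of "Suc i"] g(3) i by (intro bwd_cell_det[OF eqH _ _ _ c_def c0]) auto
  qed
  also have "\<dots> = 4 * (\<Sum>k\<in>{1..d}. \<Sum>i<K. BND c k (g i) (g (Suc i)))"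
  proof -
    have sw: "(\<Sum>i<K. \<Sum>k\<in>{1..d}. BND c k (g i) (g (Suc i))) = (\<Sum>k\<in>{1..d}. \<Sum>i<K. BND c k (g i) (g (Suc i)))"
      by (rule sum.swap)
    show ?thesis unfolding sum_distrib_left[symmetric] sw ..
  qed
  also have "\<dots> \<le> 4 * (\<Sum>k\<in>{1..d}. \<epsilon> * (2 + real d) / c\<^sup>2)"
    by (intro mult_left_mono sum_mono BND_sum[OF g c0 ep]) auto
  also have "\<dots> = e / 2"
    unfolding \<epsilon>_def q_def[symmetric] using c0 q0 dpos by (simp add: field_simps)
  finally have bB: "b < e" using e by simp
  have pw: "\<bar>Fh (\<lambda>m. X m \<omega>) n d k0 t - subdist M T D k0 t\<bar> \<le> B n \<omega>" for n \<omega>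
  proof -
    have ind: "Eerr \<omega> n (g i) \<le> (\<Sum>j<i. CBn n \<omega> (g j) (g (Suc j)))" if "i \<le> K" for i
      using that
    proof (induction i)
      case 0
      show ?case unfolding Eerr_def g(1) by (simp add: Fh_0 subdist_T_0)
    next
      case (Suc i)
      have "Eerr \<omega> n (g (Suc i)) \<le> Eerr \<omega> n (g i) + CBn n \<omega> (g i) (g (Suc i))"
        using gr[of i] gr[of "Suc i"] g(3) Suc.prems by (intro Eerr_step[OF _ _ _ c_def c0]) auto
      then show ?case using Suc by simp
    qed
    have "\<bar>Fh (\<lambda>m. X m \<omega>) n d k0 t - subdist M T D k0 t\<bar> \<le> (\<Sum>k\<in>{1..d}. \<bar>Fh (\<lambda>m. X m \<omega>) n d k t - subdist M T D k t\<bar>)"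
      by (rule member_le_sum) (use k0 in auto)
    also have "\<dots> \<le> Eerr \<omega> n t" unfolding Eerr_def by simp
    also have "\<dots> \<le> B n \<omega>" using ind[of K] unfolding B_def g(2) by simp
    finally show ?thesis .
  qed
  show "\<exists>B b. consistent M B b \<and> b < e \<and> (\<forall>n. B n \<in> borel_measurable M) \<and>
       (\<forall>n. \<forall>\<omega>\<in>space M. \<bar>Fh (\<lambda>m. X m \<omega>) n d k0 t - subdist M T D k0 t\<bar> \<le> B n \<omega>)"
  proof -
    have Bm: "B n \<in> borel_measurable M" for n unfolding B_def by measurable
    show ?thesis using cB bB pw Bm by blast
  qed
qed


lemma Pmat_00: "Pmat M T D d t $$ (0,0) = surv M T t" by (simp add: Pmat_def)
lemma Pmat_0k: "k \<in> {1..d} \<Longrightarrow> Pmat M T D d t $$ (0,k) = subdist M T D k t" by (simp add: Pmat_def)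
lemma Pmat_ik: "0 < i \<Longrightarrow> i < d+1 \<Longrightarrow> k < d+1 \<Longrightarrow> Pmat M T D d t $$ (i,k) = (if i = k then 1 else 0)"
  by (simp add: Pmat_def)

lemma Hmat_eq_iff: "Hmat M Tt Dt d t = Hmat M T D d t \<longleftrightarrow> (\<forall>k\<in>{1..d}. cumhaz M Tt Dt k t = cumhaz M T D k t)"
proof
  assume h: "Hmat M Tt Dt d t = Hmat M T D d t"
  show "\<forall>k\<in>{1..d}. cumhaz M Tt Dt k t = cumhaz M T D k t"
  proof
    fix k assume k: "k \<in> {1..d}"
    have "Hmat M Tt Dt d t $$ (0,k) = Hmat M T D d t $$ (0,k)" using h by simp
    then show "cumhaz M Tt Dt k t = cumhaz M T D k t" using k by (simp add: Hmat_def)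
  qed
next
  assume h: "\<forall>k\<in>{1..d}. cumhaz M Tt Dt k t = cumhaz M T D k t"
  then have tot: "cumhaz_tot M Tt Dt d t = cumhaz_tot M T D d t" unfolding cumhaz_tot_def by simp
  show "Hmat M Tt Dt d t = Hmat M T D d t"
    by (rule eq_matI) (use h tot in \<open>auto simp: Hmat_def\<close>)
qed

lemma main_fwd:
  assumes "\<forall>t\<in>{t. 0 \<le> t \<and> surv M Tt t > 0}. \<forall>j\<in>{1..d}.
             consistent M (\<lambda>n \<omega>. AJ (\<lambda>m. X m \<omega>) n d t $$ (0,j)) (Pmat M T D d t $$ (0,j))"
  shows "\<forall>t\<in>{t. 0 \<le> t \<and> surv M Tt t > 0}. \<forall>j\<in>{1..d}. cumhaz M Tt Dt j t = cumhaz M T D j t"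
proof (intro ballI)
  fix t j assume t: "t \<in> {t. 0 \<le> t \<and> surv M Tt t > 0}" and j: "j \<in> {1..d}"
  have cons: "consistent M (\<lambda>n \<omega>. Fh (\<lambda>m. X m \<omega>) n d k t') (subdist M T D k t')"
    if "0 \<le> t'" "surv M Tt t' > 0" "k \<in> {1..d}" for t' k
    using assms that by (simp add: AJ_0k Pmat_0k)
  show "cumhaz M Tt Dt j t = cumhaz M T D j t"
    by (rule core_fwd[OF cons]) (use t j in auto)
qed

lemma main_bwd:
  assumes "\<forall>t\<in>{t. 0 \<le> t \<and> surv M Tt t > 0}. \<forall>j\<in>{1..d}. cumhaz M Tt Dt j t = cumhaz M T D j t"
  shows "\<forall>t\<in>{t. 0 \<le> t \<and> surv M Tt t > 0}. \<forall>i<d+1. \<forall>k<d+1.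
             consistent M (\<lambda>n \<omega>. AJ (\<lambda>m. X m \<omega>) n d t $$ (i,k)) (Pmat M T D d t $$ (i,k))"
proof (intro ballI allI impI)
  fix t i k assume t: "t \<in> {t. 0 \<le> t \<and> surv M Tt t > 0}" and i: "i < d+1" and k: "k < d+1"
  have eqH: "cumhaz M Tt Dt k t' = cumhaz M T D k t'" if "0 \<le> t'" "surv M Tt t' > 0" "k \<in> {1..d}" for t' k
    using assms that by auto
  have cF: "consistent M (\<lambda>n \<omega>. Fh (\<lambda>m. X m \<omega>) n d k' t) (subdist M T D k' t)" if "k' \<in> {1..d}" for k'
    by (rule core_bwd[OF eqH]) (use t that in auto)
  show "consistent M (\<lambda>n \<omega>. AJ (\<lambda>m. X m \<omega>) n d t $$ (i,k)) (Pmat M T D d t $$ (i,k))"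
  proof (cases "i = 0")
    case True
    show ?thesis
    proof (cases "k = 0")
      case True
      then show ?thesis using \<open>i = 0\<close> cons_Sh[OF cF] by (simp add: AJ_00 Pmat_00)
    next
      case False
      then have "k \<in> {1..d}" using k by auto
      then show ?thesis using \<open>i = 0\<close> cF by (simp add: AJ_0k Pmat_0k)
    qed
  next
    case False
    then show ?thesis using i k by (simp add: AJ_ik Pmat_ik consistent_const)
  qed
qed

end

theorem proposition1:
  fixes M :: "'a measure" and d :: nat
    and T Tt :: "'a \<Rightarrow> real" and D Dt :: "'a \<Rightarrow> nat"
    and X :: "nat \<Rightarrow> 'a \<Rightarrow> real \<times> nat"
  assumes "prob_space M"
    and "d \<ge> 1"
    and "T \<in> borel_measurable M" and "\<forall>\<omega>\<in>space M. T \<omega> > 0"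
    and "D \<in> measurable M (count_space UNIV)" and "\<forall>\<omega>\<in>space M. D \<omega> \<in> {1..d}"
    and "Tt \<in> borel_measurable M" and "\<forall>\<omega>\<in>space M. 0 < Tt \<omega> \<and> Tt \<omega> \<le> T \<omega>"
    and "\<forall>\<omega>. Dt \<omega> = (if Tt \<omega> = T \<omega> then D \<omega> else 0)"
    and "prob_space.indep_vars M (\<lambda>_. borel \<Otimes>\<^sub>M count_space UNIV) X UNIV"
    and "\<forall>i. distr M (borel \<Otimes>\<^sub>M count_space UNIV) (X i)
             = distr M (borel \<Otimes>\<^sub>M count_space UNIV) (\<lambda>\<omega>. (Tt \<omega>, Dt \<omega>))"
  shows "((\<forall>t\<in>{t. 0 \<le> t \<and> surv M Tt t > 0}. \<forall>i<d+1. \<forall>k<d+1.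
             consistent M (\<lambda>n \<omega>. AJ (\<lambda>m. X m \<omega>) n d t $$ (i,k)) (Pmat M T D d t $$ (i,k)))
          \<longleftrightarrow> (\<forall>t\<in>{t. 0 \<le> t \<and> surv M Tt t > 0}. Hmat M Tt Dt d t = Hmat M T D d t))
       \<and> ((\<forall>t\<in>{t. 0 \<le> t \<and> surv M Tt t > 0}. \<forall>j\<in>{1..d}.
             consistent M (\<lambda>n \<omega>. AJ (\<lambda>m. X m \<omega>) n d t $$ (0,j)) (Pmat M T D d t $$ (0,j)))
          \<longleftrightarrow> (\<forall>t\<in>{t. 0 \<le> t \<and> surv M Tt t > 0}. \<forall>j\<in>{1..d}.
             cumhaz M Tt Dt j t = cumhaz M T D j t))"
proof -
  interpret A: AJset M d T Tt D Dt X
    unfolding AJset_def AJset_axioms_def using assms by auto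
  have p1: "(\<forall>t\<in>{t. 0 \<le> t \<and> surv M Tt t > 0}. \<forall>i<d+1. \<forall>k<d+1.
             consistent M (\<lambda>n \<omega>. AJ (\<lambda>m. X m \<omega>) n d t $$ (i,k)) (Pmat M T D d t $$ (i,k)))
          \<longleftrightarrow> (\<forall>t\<in>{t. 0 \<le> t \<and> surv M Tt t > 0}. Hmat M Tt Dt d t = Hmat M T D d t)"
  proof
    assume h: "\<forall>t\<in>{t. 0 \<le> t \<and> surv M Tt t > 0}. \<forall>i<d+1. \<forall>k<d+1.
             consistent M (\<lambda>n \<omega>. AJ (\<lambda>m. X m \<omega>) n d t $$ (i,k)) (Pmat M T D d t $$ (i,k))"
    have "\<forall>t\<in>{t. 0 \<le> t \<and> surv M Tt t > 0}. \<forall>j\<in>{1..d}.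
             consistent M (\<lambda>n \<omega>. AJ (\<lambda>m. X m \<omega>) n d t $$ (0,j)) (Pmat M T D d t $$ (0,j))"
      using h by auto
    from A.main_fwd[OF this] show "\<forall>t\<in>{t. 0 \<le> t \<and> surv M Tt t > 0}. Hmat M Tt Dt d t = Hmat M T D d t"
      by (simp add: A.Hmat_eq_iff)
  next
    assume h: "\<forall>t\<in>{t. 0 \<le> t \<and> surv M Tt t > 0}. Hmat M Tt Dt d t = Hmat M T D d t"
    then have "\<forall>t\<in>{t. 0 \<le> t \<and> surv M Tt t > 0}. \<forall>j\<in>{1..d}. cumhaz M Tt Dt j t = cumhaz M T D j t"
      by (simp add: A.Hmat_eq_iff)
    from A.main_bwd[OF this] show "\<forall>t\<in>{t. 0 \<le> t \<and> surv M Tt t > 0}. \<forall>i<d+1. \<forall>k<d+1.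
             consistent M (\<lambda>n \<omega>. AJ (\<lambda>m. X m \<omega>) n d t $$ (i,k)) (Pmat M T D d t $$ (i,k))" .
  qed
  have p2: "(\<forall>t\<in>{t. 0 \<le> t \<and> surv M Tt t > 0}. \<forall>j\<in>{1..d}.
             consistent M (\<lambda>n \<omega>. AJ (\<lambda>m. X m \<omega>) n d t $$ (0,j)) (Pmat M T D d t $$ (0,j)))
          \<longleftrightarrow> (\<forall>t\<in>{t. 0 \<le> t \<and> surv M Tt t > 0}. \<forall>j\<in>{1..d}.
             cumhaz M Tt Dt j t = cumhaz M T D j t)"
  proof
    assume h: "\<forall>t\<in>{t. 0 \<le> t \<and> surv M Tt t > 0}. \<forall>j\<in>{1..d}.
             consistent M (\<lambda>n \<omega>. AJ (\<lambda>m. X m \<omega>) n d t $$ (0,j)) (Pmat M T D d t $$ (0,j))"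
    show "\<forall>t\<in>{t. 0 \<le> t \<and> surv M Tt t > 0}. \<forall>j\<in>{1..d}. cumhaz M Tt Dt j t = cumhaz M T D j t"
      by (rule A.main_fwd[OF h])
  next
    assume h: "\<forall>t\<in>{t. 0 \<le> t \<and> surv M Tt t > 0}. \<forall>j\<in>{1..d}. cumhaz M Tt Dt j t = cumhaz M T D j t"
    have all: "\<forall>t\<in>{t. 0 \<le> t \<and> surv M Tt t > 0}. \<forall>i<d+1. \<forall>k<d+1.
             consistent M (\<lambda>n \<omega>. AJ (\<lambda>m. X m \<omega>) n d t $$ (i,k)) (Pmat M T D d t $$ (i,k))"
      by (rule A.main_bwd[OF h])
    show "\<forall>t\<in>{t. 0 \<le> t \<and> surv M Tt t > 0}. \<forall>j\<in>{1..d}.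
             consistent M (\<lambda>n \<omega>. AJ (\<lambda>m. X m \<omega>) n d t $$ (0,j)) (Pmat M T D d t $$ (0,j))"
    proof (intro ballI)
      fix t j assume "t \<in> {t. 0 \<le> t \<and> surv M Tt t > 0}" "j \<in> {1..d}"
      then show "consistent M (\<lambda>n \<omega>. AJ (\<lambda>m. X m \<omega>) n d t $$ (0,j)) (Pmat M T D d t $$ (0,j))"
        using all by auto
    qed
  qed
  show ?thesis using p1 p2 by blast
qed


end
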